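(* Let $\Gamma$ be a metrized graph with adequate vertex set $V(\Gamma)$ and $D=\sum_{s\in V(\Gamma)}a_s s$ a divisor with $\deg D\neq-2$. Let $x,y\in\Gamma$. (1) If $x,y$ lie on the same edge $e$ of length $L$ with endpoints $p,q$, and $e$ is not a bridge, then \[g_{\mu_D}(x,y)=\tau_D(x,y)-\tfrac12|x-y|+(x-y)^2\frac{L-r(p,q)}{2L^2}.\] (2) If $x\in e_i$, $y\in e_j$ with $e_i\neq e_j$, neither a bridge, $e_i$ of length $L_i$ with endpoints $p_i$ (coordinate $0$), $q_i$ (coordinate $L_i$), and $e_j$ of length $L_j$ with endpoints $p_j$ (coordinate $0$), $q_j$ (coordinate $L_j$), then \[\begin{aligned}g_{\mu_D}(x,y)=\tau_D(x,y)&+x^2\frac{L_i-r(p_i,q_i)}{2L_i^2}+y^2\frac{L_j-r(p_j,q_j)}{2L_j^2}-\frac{xy}{L_iL_j}\big(j_{p_j}(p_i,q_j)-j_{p_j}(q_i,q_j)\big)\\&-\frac{x}{2L_i}\big(L_i-2j_{p_i}(q_i,p_j)\big)-\frac{y}{2L_j}\big(L_j-2j_{p_j}(p_i,q_j)\big)-\tfrac12 r(p_i,p_j).\end{aligned}\]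
   Context: A metrized graph $\Gamma$ is a finite connected graph each of whose edges is identified with a closed interval $[0,L]$; a point on an edge with endpoints $p$ (at $0$) and $q$ (at $L$) is identified with its coordinate in $[0,L]$. A vertex set is a nonempty finite set containing all points of valence $\neq 2$; it is adequate if there are no loops or parallel edges. An edge is a bridge if deleting its interior disconnects $\Gamma$. $j_z(x,y)$ is the voltage function (Chinburg–Rumely): $\Delta_x j_z(x,y)=\delta_y-\delta_z$, $j_z(z,y)=0$; it is continuous, symmetric in $x,y$, nonnegative. $r(x,y):=j_y(x,x)$ is the resistance function, and $j_s(x,y)=\tfrac12(r(s,x)+r(s,y)-r(x,y))$. For a signed measure $\mu$ with $\mu(\Gamma)=1$, $g_\mu(x,y)=\int j_z(x,y)d\mu(z)-\int_{\Gamma^3}j_z(x,y)d\mu(z)d\mu(x)d\mu(y)$. $\mu_{\mathrm{can}}$ is the unique such measure with $\int j_z(x,x)d\mu(z)$ constant in $x$, and $\tau(\Gamma)$ is half that constant. Divisors $D=\sum a_s s$ have integer coefficients and support in $V(\Gamma)$. The admissible measure is $\mu_D=\frac{1}{\deg D+2}(\sum a_s\delta_s+2\mu_{\mathrm{can}})$, and $g_{\mu_D}$ is the associated Arakelov–Green function; it is known that $g_{\mu_D}(x,y)=\frac{1}{\deg D+2}\big(\sum_s a_sj_s(x,y)+4\tau(\Gamma)-r(x,y)\big)-c_{\mu_D}$ with $c_{\mu_D}=\frac{1}{2(\deg D+2)^2}\big(8\tau(\Gamma)(\deg D+1)+\sum_{s,t}a_sa_tr(s,t)\big)$. With $r(D,x)=\sum_s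 a_s r(s,x)$, the tau function is $\tau_D(x,y)=\frac{1}{\deg D+2}\big(4\tau(\Gamma)+\tfrac12(r(D,x)+r(D,y))\big)-c_{\mu_D}$. *)

theory Defs
  imports "HOL-Analysis.Analysis"
begin

text \<open>
A metrized graph is given by a finite vertex set V, a set E of oriented edges
(p,q) (the point p has coordinate 0, q has coordinate L (p,q)), and edge lengths L.
Adequacy (no loops, no parallel edges) is built into the representation: each
unordered pair of vertices carries at most one edge.
\<close>

datatype 'v mpt = Vert 'v | Inner "'v \<times> 'v" real

definition adj :: "('v \<times> 'v) set \<Rightarrow> ('v \<times> 'v) set" where
  "adj E = E \<union> E\<inverse>"

definition graph_connected :: "'v set \<Rightarrow> ('v \<times> 'v) set \<Rightarrow> bool" where
  "graph_connected V E \<longleftrightarrow> (\<forall>u\<in>V. \<forall>w\<in>V. (u, w) \<in> (adj E)\<^sup>*)"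

definition metrized_graph :: "'v set \<Rightarrow> ('v \<times> 'v) set \<Rightarrow> ('v \<times> 'v \<Rightarrow> real) \<Rightarrow> bool" where
  "metrized_graph V E L \<longleftrightarrow>
     finite V \<and> V \<noteq> {} \<and> E \<subseteq> V \<times> V \<and> (\<forall>e\<in>E. L e > 0) \<and>
     (\<forall>(p, q)\<in>E. p \<noteq> q) \<and> (\<forall>(p, q)\<in>E. (q, p) \<notin> E) \<and>
     graph_connected V E"

definition pt_of :: "('v \<times> 'v \<Rightarrow> real) \<Rightarrow> 'v \<times> 'v \<Rightarrow> real \<Rightarrow> 'v mpt" where
  "pt_of L e t = (if t = 0 then Vert (fst e) else if t = L e then Vert (snd e) else Inner e t)"

definition points :: "'v set \<Rightarrow> ('v \<times> 'v) set \<Rightarrow> ('v \<times> 'v \<Rightarrow> real) \<Rightarrow> 'v mpt set" where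
  "points V E L = Vert ` V \<union> {Inner e t | e t. e \<in> E \<and> 0 < t \<and> t < L e}"

definition is_bridge :: "'v set \<Rightarrow> ('v \<times> 'v) set \<Rightarrow> 'v \<times> 'v \<Rightarrow> bool" where
  "is_bridge V E e \<longleftrightarrow> e \<in> E \<and> \<not> graph_connected V (E - {e})"

definition PL_on :: "real \<Rightarrow> (real \<Rightarrow> real) \<Rightarrow> bool" where
  "PL_on l \<phi> \<longleftrightarrow> (\<exists>K. finite K \<and> K \<subseteq> {0<..<l} \<and>
      (\<forall>a b. 0 \<le> a \<and> a < b \<and> b \<le> l \<and> {a<..<b} \<inter> K = {} \<longrightarrow>
         (\<exists>m c. \<forall>t\<in>{a..b}. \<phi> t = m * t + c)))"

definition rderiv :: "(real \<Rightarrow> real) \<Rightarrow> real \<Rightarrow> real" where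
  "rderiv \<phi> t = (THE m. (\<phi> has_real_derivative m) (at t within {t<..}))"

definition lderiv :: "(real \<Rightarrow> real) \<Rightarrow> real \<Rightarrow> real" where
  "lderiv \<phi> t = (THE m. (\<phi> has_real_derivative m) (at t within {..<t}))"

definition out_slopes ::
  "('v \<times> 'v) set \<Rightarrow> ('v \<times> 'v \<Rightarrow> real) \<Rightarrow> ('v mpt \<Rightarrow> real) \<Rightarrow> 'v mpt \<Rightarrow> real" where
  "out_slopes E L f x = (case x of
      Vert v \<Rightarrow> (\<Sum>e\<in>{e\<in>E. fst e = v}. rderiv (\<lambda>t. f (pt_of L e t)) 0)
              + (\<Sum>e\<in>{e\<in>E. snd e = v}. - lderiv (\<lambda>t. f (pt_of L e t)) (L e))
    | Inner e t \<Rightarrow> rderiv (\<lambda>s. f (pt_of L e s)) t - lderiv (\<lambda>s. f (pt_of L e s)) t)"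

text \<open>f is the voltage function x \<mapsto> j_z(x,y): continuous piecewise linear on Gamma
  (zero off Gamma), Laplacian \<Delta>f = - sum_x sigma_x(f) \<delta>_x equal to \<delta>_y - \<delta>_z,
  and f(z) = 0.\<close>
definition is_voltage ::
  "'v set \<Rightarrow> ('v \<times> 'v) set \<Rightarrow> ('v \<times> 'v \<Rightarrow> real) \<Rightarrow> 'v mpt \<Rightarrow> 'v mpt \<Rightarrow> ('v mpt \<Rightarrow> real) \<Rightarrow> bool" where
  "is_voltage V E L z y f \<longleftrightarrow>
     (\<forall>x. x \<notin> points V E L \<longrightarrow> f x = 0) \<and>
     (\<forall>e\<in>E. PL_on (L e) (\<lambda>t. f (pt_of L e t))) \<and>
     (\<forall>x\<in>points V E L. - out_slopes E L f x = (if x = y then 1 else 0) - (if x = z then 1 else 0)) \<and>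
     f z = 0"

definition jv :: "'v set \<Rightarrow> ('v \<times> 'v) set \<Rightarrow> ('v \<times> 'v \<Rightarrow> real) \<Rightarrow> 'v mpt \<Rightarrow> 'v mpt \<Rightarrow> 'v mpt \<Rightarrow> real" where
  "jv V E L z x y = (THE f. is_voltage V E L z y f) x"

definition res :: "'v set \<Rightarrow> ('v \<times> 'v) set \<Rightarrow> ('v \<times> 'v \<Rightarrow> real) \<Rightarrow> 'v mpt \<Rightarrow> 'v mpt \<Rightarrow> real" where
  "res V E L x y = jv V E L y x x"

text \<open>Signed measures on Gamma of the form sum_v c_v \<delta>_v + density on the edges.\<close>
type_synonym 'v gmeas = "('v \<Rightarrow> real) \<times> ('v \<times> 'v \<Rightarrow> real \<Rightarrow> real)"

definition is_gmeas :: "'v set \<Rightarrow> ('v \<times> 'v) set \<Rightarrow> ('v \<times> 'v \<Rightarrow> real) \<Rightarrow> 'v gmeas \<Rightarrow> bool" where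
  "is_gmeas V E L \<mu> \<longleftrightarrow> (\<forall>v. v \<notin> V \<longrightarrow> fst \<mu> v = 0) \<and>
     (\<forall>e\<in>E. snd \<mu> e absolutely_integrable_on {0..L e})"

definition integ :: "'v set \<Rightarrow> ('v \<times> 'v) set \<Rightarrow> ('v \<times> 'v \<Rightarrow> real) \<Rightarrow> 'v gmeas \<Rightarrow> ('v mpt \<Rightarrow> real) \<Rightarrow> real" where
  "integ V E L \<mu> F = (\<Sum>v\<in>V. fst \<mu> v * F (Vert v))
      + (\<Sum>e\<in>E. integral {0..L e} (\<lambda>t. snd \<mu> e t * F (pt_of L e t)))"

definition is_canonical :: "'v set \<Rightarrow> ('v \<times> 'v) set \<Rightarrow> ('v \<times> 'v \<Rightarrow> real) \<Rightarrow> 'v gmeas \<Rightarrow> bool" where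
  "is_canonical V E L \<mu> \<longleftrightarrow> is_gmeas V E L \<mu> \<and> integ V E L \<mu> (\<lambda>_. 1) = 1 \<and>
     (\<exists>C. \<forall>x\<in>points V E L. integ V E L \<mu> (\<lambda>z. jv V E L z x x) = C)"

definition mu_can :: "'v set \<Rightarrow> ('v \<times> 'v) set \<Rightarrow> ('v \<times> 'v \<Rightarrow> real) \<Rightarrow> 'v gmeas" where
  "mu_can V E L = (SOME \<mu>. is_canonical V E L \<mu>)"

definition tau_graph :: "'v set \<Rightarrow> ('v \<times> 'v) set \<Rightarrow> ('v \<times> 'v \<Rightarrow> real) \<Rightarrow> real" where
  "tau_graph V E L = (let x0 = Vert (SOME v. v \<in> V) in
      integ V E L (mu_can V E L) (\<lambda>z. jv V E L z x0 x0) / 2)"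

definition deg :: "'v set \<Rightarrow> ('v \<Rightarrow> int) \<Rightarrow> int" where
  "deg V a = (\<Sum>v\<in>V. a v)"

definition mu_D :: "'v set \<Rightarrow> ('v \<times> 'v) set \<Rightarrow> ('v \<times> 'v \<Rightarrow> real) \<Rightarrow> ('v \<Rightarrow> int) \<Rightarrow> 'v gmeas" where
  "mu_D V E L a = (\<lambda>v. (of_int (a v) + 2 * fst (mu_can V E L) v) / (of_int (deg V a) + 2),
                   \<lambda>e t. 2 * snd (mu_can V E L) e t / (of_int (deg V a) + 2))"

definition c_mu :: "'v set \<Rightarrow> ('v \<times> 'v) set \<Rightarrow> ('v \<times> 'v \<Rightarrow> real) \<Rightarrow> 'v gmeas \<Rightarrow> real" where
  "c_mu V E L \<mu> = integ V E L \<mu> (\<lambda>z. integ V E L \<mu> (\<lambda>x. integ V E L \<mu> (\<lambda>y. jv V E L z x y)))"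

definition g_mu :: "'v set \<Rightarrow> ('v \<times> 'v) set \<Rightarrow> ('v \<times> 'v \<Rightarrow> real) \<Rightarrow> 'v gmeas \<Rightarrow> 'v mpt \<Rightarrow> 'v mpt \<Rightarrow> real" where
  "g_mu V E L \<mu> x y = integ V E L \<mu> (\<lambda>z. jv V E L z x y) - c_mu V E L \<mu>"

definition res_D :: "'v set \<Rightarrow> ('v \<times> 'v) set \<Rightarrow> ('v \<times> 'v \<Rightarrow> real) \<Rightarrow> ('v \<Rightarrow> int) \<Rightarrow> 'v mpt \<Rightarrow> real" where
  "res_D V E L a x = (\<Sum>s\<in>V. of_int (a s) * res V E L (Vert s) x)"

definition tau_D :: "'v set \<Rightarrow> ('v \<times> 'v) set \<Rightarrow> ('v \<times> 'v \<Rightarrow> real) \<Rightarrow> ('v \<Rightarrow> int) \<Rightarrow> 'v mpt \<Rightarrow> 'v mpt \<Rightarrow> real" where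
  "tau_D V E L a x y = 1 / (of_int (deg V a) + 2) *
      (4 * tau_graph V E L + (res_D V E L a x + res_D V E L a y) / 2) - c_mu V E L (mu_D V E L a)"

end

theory Submission
  imports Defs "Jordan_Normal_Form.Determinant"
begin


locale mg =
  fixes V :: "'v set" and E :: "('v \<times> 'v) set" and L :: "'v \<times> 'v \<Rightarrow> real"
  assumes mgr: "metrized_graph V E L"
begin

lemma finV: "finite V" and Vne: "V \<noteq> {}" and EV: "E \<subseteq> V \<times> V" and Lpos: "e \<in> E \<Longrightarrow> L e > 0"
  and loopfree: "(p,q) \<in> E \<Longrightarrow> p \<noteq> q" and antisymE: "(p,q) \<in> E \<Longrightarrow> (q,p) \<notin> E"
  and conn: "graph_connected V E"
  using mgr unfolding metrized_graph_def by auto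

lemma finE: "finite E"
  using finite_subset[OF EV] finV by auto

lemma fstE: "e \<in> E \<Longrightarrow> fst e \<in> V" and sndE: "e \<in> E \<Longrightarrow> snd e \<in> V"
  using EV by auto

definition lap :: "('v \<Rightarrow> real) \<Rightarrow> 'v \<Rightarrow> real" where
  "lap u v = (\<Sum>e\<in>{e\<in>E. fst e = v}. (u (snd e) - u v) / L e) + (\<Sum>e\<in>{e\<in>E. snd e = v}. (u (fst e) - u v) / L e)"

lemma group_fst: "(\<Sum>v\<in>V. \<Sum>e\<in>{e\<in>E. fst e = v}. h e) = (\<Sum>e\<in>E. h e)"
proof -
  have "fst ` E \<subseteq> V" using fstE by auto
  from sum.group[OF finE finV this, of h] show ?thesis by simp
qed

lemma group_snd: "(\<Sum>v\<in>V. \<Sum>e\<in>{e\<in>E. snd e = v}. h e) = (\<Sum>e\<in>E. h e)"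
proof -
  have "snd ` E \<subseteq> V" using sndE by auto
  from sum.group[OF finE finV this, of h] show ?thesis by simp
qed

lemma lap_alt: "lap u v = (\<Sum>e\<in>{e\<in>E. fst e = v}. (u (snd e) - u (fst e)) / L e) + (\<Sum>e\<in>{e\<in>E. snd e = v}. (u (fst e) - u (snd e)) / L e)"
  unfolding lap_def by (auto intro!: arg_cong2[where f="(+)"] sum.cong)

lemma lap_sum_zero: "(\<Sum>v\<in>V. lap u v) = 0"
proof -
  have "(\<Sum>v\<in>V. lap u v) = (\<Sum>e\<in>E. (u (snd e) - u (fst e)) / L e) + (\<Sum>e\<in>E. (u (fst e) - u (snd e)) / L e)"
    unfolding lap_alt sum.distrib group_fst group_snd ..
  also have "\<dots> = (\<Sum>e\<in>E. 0)" unfolding sum.distrib[symmetric] by (rule sum.cong) (auto simp: diff_divide_distrib)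
  also have "\<dots> = 0" by simp
  finally show ?thesis .
qed

lemma lap_lin: "lap (\<lambda>x. a * f x + b * g x + c) v = a * lap f v + b * lap g v"
proof -
  have 1: "(\<Sum>e\<in>{e\<in>E. fst e = v}. ((a * f (snd e) + b * g (snd e) + c) - (a * f v + b * g v + c)) / L e)
     = a * (\<Sum>e\<in>{e\<in>E. fst e = v}. (f (snd e) - f v) / L e) + b * (\<Sum>e\<in>{e\<in>E. fst e = v}. (g (snd e) - g v) / L e)"
    by (simp add: sum_distrib_left sum.distrib[symmetric] diff_divide_distrib add_divide_distrib algebra_simps)
  have 2: "(\<Sum>e\<in>{e\<in>E. snd e = v}. ((a * f (fst e) + b * g (fst e) + c) - (a * f v + b * g v + c)) / L e)
     = a * (\<Sum>e\<in>{e\<in>E. snd e = v}. (f (fst e) - f v) / L e) + b * (\<Sum>e\<in>{e\<in>E. snd e = v}. (g (fst e) - g v) / L e)"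
    by (simp add: sum_distrib_left sum.distrib[symmetric] diff_divide_distrib add_divide_distrib algebra_simps)
  show ?thesis unfolding lap_def using 1 2 by (simp add: algebra_simps)
qed

lemma adj_step: "(v, x) \<in> adj E \<Longrightarrow> (\<exists>e\<in>E. fst e = v \<and> snd e = x) \<or> (\<exists>e\<in>E. snd e = v \<and> fst e = x)"
  unfolding adj_def by force

lemma max_principle:
  assumes h: "\<forall>v\<in>V. lap u v = 0" and v: "v \<in> V" and x: "x \<in> V"
  shows "u v = u x"
proof -
  define M where "M = Max (u ` V)"
  have le: "\<And>y. y \<in> V \<Longrightarrow> u y \<le> M" unfolding M_def using finV by auto
  obtain v0 where v0: "v0 \<in> V" "u v0 = M" unfolding M_def using finV Vne
    by (metis (mono_tags, lifting) Max_in empty_is_image finite_imageI imageE)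
  have step: "u y = M" if "u z = M" "z \<in> V" "(z, y) \<in> adj E" for z y
  proof -
    have lz: "lap u z = 0" using h that by auto
    have n1: "\<forall>e\<in>{e\<in>E. fst e = z}. (u (snd e) - u z) / L e \<le> 0"
      using that(1) le sndE Lpos by (auto simp: divide_le_0_iff less_imp_le)
    have n2: "\<forall>e\<in>{e\<in>E. snd e = z}. (u (fst e) - u z) / L e \<le> 0"
      using that(1) le fstE Lpos by (auto simp: divide_le_0_iff less_imp_le)
    have s1: "(\<Sum>e\<in>{e\<in>E. fst e = z}. (u (snd e) - u z) / L e) \<le> 0" by (rule sum_nonpos) (use n1 in auto)
    have s2: "(\<Sum>e\<in>{e\<in>E. snd e = z}. (u (fst e) - u z) / L e) \<le> 0" by (rule sum_nonpos) (use n2 in auto)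
    have z1: "(\<Sum>e\<in>{e\<in>E. fst e = z}. (u (snd e) - u z) / L e) = 0" using lz s1 s2 unfolding lap_def by linarith
    have z2: "(\<Sum>e\<in>{e\<in>E. snd e = z}. (u (fst e) - u z) / L e) = 0" using lz s1 s2 unfolding lap_def by linarith
    have a1: "\<forall>e\<in>{e\<in>E. fst e = z}. (u (snd e) - u z) / L e = 0"
      using sum_nonneg_eq_0_iff[of "{e\<in>E. fst e = z}" "\<lambda>e. - ((u (snd e) - u z) / L e)"] z1 n1 finE by (auto simp: sum_negf)
    have a2: "\<forall>e\<in>{e\<in>E. snd e = z}. (u (fst e) - u z) / L e = 0"
      using sum_nonneg_eq_0_iff[of "{e\<in>E. snd e = z}" "\<lambda>e. - ((u (fst e) - u z) / L e)"] z2 n2 finE by (auto simp: sum_negf)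
    from adj_step[OF that(3)] show ?thesis
      using a1 a2 Lpos that(1) by force
  qed
  have all: "u y = M" if "y \<in> V" for y
  proof -
    have "(v0, y) \<in> (adj E)\<^sup>*" using conn v0 that unfolding graph_connected_def by auto
    then have "y \<in> V \<and> u y = M"
    proof (induction rule: rtrancl_induct)
      case base then show ?case using v0 by auto
    next
      case (step y z)
      then have "z \<in> V" using EV unfolding adj_def by auto
      then show ?case using step.IH step(2) \<open>z \<in> V\<close> by (metis \<open>\<And>z y. u z = M \<Longrightarrow> z \<in> V \<Longrightarrow> (z, y) \<in> adj E \<Longrightarrow> u y = M\<close>)
    qed
    then show ?thesis by auto
  qed
  show ?thesis using all v x by auto
qed

end


context mg begin

definition Dg :: "'v \<Rightarrow> real" where
  "Dg v = (\<Sum>e\<in>{e\<in>E. fst e = v}. 1 / L e) + (\<Sum>e\<in>{e\<in>E. snd e = v}. 1 / L e)"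

definition Cf :: "'v \<Rightarrow> 'v \<Rightarrow> real" where
  "Cf v x = (\<Sum>e\<in>{e\<in>E. fst e = v \<and> snd e = x}. 1 / L e) + (\<Sum>e\<in>{e\<in>E. snd e = v \<and> fst e = x}. 1 / L e)
     - (if x = v then Dg v else 0)"

lemma group_gen:
  assumes "g ` A \<subseteq> V" "A \<subseteq> E"
  shows "(\<Sum>x\<in>V. \<Sum>e\<in>{e\<in>A. g e = x}. h e) = (\<Sum>e\<in>A. h e)"
proof -
  have "finite A" using assms finE finite_subset by auto
  from sum.group[OF this finV assms(1), of h] show ?thesis by simp
qed

lemma lap_coef: assumes "v \<in> V" shows "lap u v = (\<Sum>x\<in>V. Cf v x * u x)"
proof -
  have a: "(\<Sum>x\<in>V. (\<Sum>e\<in>{e\<in>E. fst e = v \<and> snd e = x}. 1 / L e) * u x) = (\<Sum>e\<in>{e\<in>E. fst e = v}. u (snd e) / L e)"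
  proof -
    have "(\<Sum>x\<in>V. (\<Sum>e\<in>{e\<in>E. fst e = v \<and> snd e = x}. 1 / L e) * u x)
        = (\<Sum>x\<in>V. \<Sum>e\<in>{e\<in>{e\<in>E. fst e = v}. snd e = x}. u (snd e) / L e)"
      by (auto simp: sum_distrib_right intro!: sum.cong arg_cong2[where f=sum])
    also have "\<dots> = (\<Sum>e\<in>{e\<in>E. fst e = v}. u (snd e) / L e)"
      by (rule group_gen) (use sndE in auto)
    finally show ?thesis .
  qed
  have b: "(\<Sum>x\<in>V. (\<Sum>e\<in>{e\<in>E. snd e = v \<and> fst e = x}. 1 / L e) * u x) = (\<Sum>e\<in>{e\<in>E. snd e = v}. u (fst e) / L e)"
  proof -
    have "(\<Sum>x\<in>V. (\<Sum>e\<in>{e\<in>E. snd e = v \<and> fst e = x}. 1 / L e) * u x)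
        = (\<Sum>x\<in>V. \<Sum>e\<in>{e\<in>{e\<in>E. snd e = v}. fst e = x}. u (fst e) / L e)"
      by (auto simp: sum_distrib_right intro!: sum.cong arg_cong2[where f=sum])
    also have "\<dots> = (\<Sum>e\<in>{e\<in>E. snd e = v}. u (fst e) / L e)"
      by (rule group_gen) (use fstE in auto)
    finally show ?thesis .
  qed
  have c: "(\<Sum>x\<in>V. (if x = v then Dg v else 0) * u x) = Dg v * u v"
  proof -
    have "(\<Sum>x\<in>V. (if x = v then Dg v else 0) * u x) = (\<Sum>x\<in>V. if x = v then Dg v * u v else 0)"
      by (rule sum.cong) auto
    then show ?thesis using assms finV by simp
  qed
  have "(\<Sum>x\<in>V. Cf v x * u x) = (\<Sum>e\<in>{e\<in>E. fst e = v}. u (snd e) / L e) + (\<Sum>e\<in>{e\<in>E. snd e = v}. u (fst e) / L e) - Dg v * u v"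
    unfolding Cf_def using a b c by (simp add: algebra_simps sum.distrib sum_subtractf)
  also have "\<dots> = lap u v"
    unfolding lap_def Dg_def by (simp add: diff_divide_distrib sum_subtractf sum_distrib_left algebra_simps)
  finally show ?thesis by simp
qed

lemma solve_lap:
  assumes w: "w \<in> V" and c: "(\<Sum>v\<in>V. c v) = 0"
  shows "\<exists>u. (\<forall>v\<in>V. lap u v = c v) \<and> u w = 0"
proof -
  obtain vs where vs: "set vs = V" "distinct vs" using finite_distinct_list[OF finV] by auto
  define n where "n = length vs"
  have injn: "inj_on (nth vs) {..<n}" using inj_on_nth[OF vs(2)] n_def by auto
  have imn: "nth vs ` {..<n} = V" using vs(1) n_def by (auto simp: set_conv_nth)
  have bij: "bij_betw (nth vs) {..<n} V" using injn imn by (simp add: bij_betw_def)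
  define idx where "idx = the_inv_into {..<n} (nth vs)"
  have idx1: "y \<in> V \<Longrightarrow> idx y < n \<and> vs ! idx y = y" for y
    unfolding idx_def using bij by (metis bij_betw_def f_the_inv_into_f_bij_betw lessThan_iff the_inv_into_into subset_refl)
  have idx2: "i < n \<Longrightarrow> idx (vs ! i) = i" for i
    unfolding idx_def using injn by (simp add: the_inv_into_f_f)
  have reidx: "(\<Sum>j\<in>{0..<n}. f (vs ! j)) = (\<Sum>x\<in>V. f x)" for f :: "'v \<Rightarrow> real"
    using sum.reindex[OF injn, of f] imn by (simp add: atLeast0LessThan)
  define i0 where "i0 = idx w"
  have i0: "i0 < n" "vs ! i0 = w" using idx1[OF w] i0_def by auto
  define A where "A = mat n n (\<lambda>(i,j). if i = i0 then (if j = i0 then 1 else 0) else Cf (vs ! i) (vs ! j))"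
  have Ac: "A \<in> carrier_mat n n" unfolding A_def by simp
  have Av: "(A *\<^sub>v x) $ i = (if i = i0 then x $ i0 else lap (\<lambda>y. x $ idx y) (vs ! i))"
    if "i < n" "x \<in> carrier_vec n" for i x
  proof -
    have "(A *\<^sub>v x) $ i = (\<Sum>j\<in>{0..<n}. A $$ (i, j) * x $ j)"
      using that Ac by (simp add: scalar_prod_def)
    also have "\<dots> = (if i = i0 then x $ i0 else lap (\<lambda>y. x $ idx y) (vs ! i))"
    proof (cases "i = i0")
      case True
      have "(\<Sum>j\<in>{0..<n}. A $$ (i, j) * x $ j) = (\<Sum>j\<in>{0..<n}. if j = i0 then x $ i0 else 0)"
        using that True by (intro sum.cong) (auto simp: A_def)
      then show ?thesis using that i0 True by simp
    next
      case False
      have "(\<Sum>j\<in>{0..<n}. A $$ (i, j) * x $ j) = (\<Sum>j\<in>{0..<n}. Cf (vs ! i) (vs ! j) * x $ idx (vs ! j))"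
        using that False by (auto simp: A_def idx2 intro!: sum.cong)
      also have "\<dots> = (\<Sum>y\<in>V. Cf (vs ! i) y * x $ idx y)"
        by (rule reidx)
      also have "\<dots> = lap (\<lambda>y. x $ idx y) (vs ! i)"
        using lap_coef[of "vs ! i"] that vs n_def by auto
      finally show ?thesis using False by simp
    qed
    finally show ?thesis .
  qed
  have "Determinant.det A \<noteq> 0"
  proof
    assume "Determinant.det A = 0"
    then obtain x where x: "x \<in> carrier_vec n" "x \<noteq> 0\<^sub>v n" "A *\<^sub>v x = 0\<^sub>v n"
      using det_0_iff_vec_prod_zero[OF Ac] by auto
    define u where "u = (\<lambda>y. x $ idx y)"
    have uw: "u w = 0" using Av[OF i0(1) x(1)] x(3) i0 u_def i0_def by simp
    have l1: "lap u y = 0" if "y \<in> V" "y \<noteq> w" for y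
    proof -
      have "idx y \<noteq> i0" using idx1 that i0 by metis
      then show ?thesis using Av[OF _ x(1), of "idx y"] x(3) idx1[OF that(1)] u_def by auto
    qed
    have l2: "lap u w = 0"
    proof -
      have "(\<Sum>v\<in>V. lap u v) = lap u w + (\<Sum>v\<in>V-{w}. lap u v)"
        using w finV by (simp add: sum.remove)
      moreover have "(\<Sum>v\<in>V-{w}. lap u v) = 0" using l1 by (auto intro!: sum.neutral)
      ultimately show ?thesis using lap_sum_zero by simp
    qed
    have "\<forall>v\<in>V. lap u v = 0" using l1 l2 by auto
    then have "u y = 0" if "y \<in> V" for y using max_principle[of u y w] that w uw by auto
    then have "x $ i = 0" if "i < n" for i
      using idx2[OF that] u_def vs that n_def by (metis nth_mem)
    then have "x = 0\<^sub>v n"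
      using x(1) by (intro eq_vecI) auto
    then show False using x(2) by simp
  qed
  then have "A \<in> Units (ring_mat TYPE(real) n ())" using det_non_zero_imp_unit[OF Ac] by auto
  then obtain B where B: "B \<in> carrier_mat n n" "A * B = 1\<^sub>m n"
    unfolding Units_def by (auto simp: ring_mat_simps)
  define b where "b = vec n (\<lambda>i. if i = i0 then 0 else c (vs ! i))"
  define x where "x = B *\<^sub>v b"
  have xc: "x \<in> carrier_vec n" unfolding x_def b_def using B by simp
  have Ax: "A *\<^sub>v x = b" unfolding x_def
    using assoc_mult_mat_vec[OF Ac B(1), of b] B(2) by (simp add: b_def)
  define u where "u = (\<lambda>y. x $ idx y)"
  have uw: "u w = 0" using Av[OF i0(1) xc] Ax i0 u_def i0_def b_def by simp
  have l1: "lap u y = c y" if "y \<in> V" "y \<noteq> w" for y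
  proof -
    have "idx y \<noteq> i0" using idx1 that i0 by metis
    then show ?thesis using Av[OF _ xc, of "idx y"] Ax idx1[OF that(1)] u_def b_def by auto
  qed
  have l2: "lap u w = c w"
  proof -
    have "(\<Sum>v\<in>V. lap u v) = lap u w + (\<Sum>v\<in>V-{w}. lap u v)"
      using w finV by (simp add: sum.remove)
    moreover have "(\<Sum>v\<in>V-{w}. lap u v) = (\<Sum>v\<in>V-{w}. c v)" using l1 by (auto intro!: sum.cong)
    moreover have "(\<Sum>v\<in>V. c v) = c w + (\<Sum>v\<in>V-{w}. c v)"
      using w finV by (simp add: sum.remove)
    ultimately show ?thesis using lap_sum_zero c by simp
  qed
  show ?thesis using l1 l2 uw by metis
qed

end


lemma rderiv_lin:
  assumes d: "d > 0" and f: "\<forall>u\<in>{t..<t+d}. f u = a * u + c"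
  shows "(f has_real_derivative a) (at t within {t<..})" "rderiv f t = a"
proof -
  have ev: "eventually (\<lambda>y. (f y - f t) / (y - t) = a) (at t within {t<..})"
    unfolding eventually_at_right_field
    using d f by (intro exI[of _ "t + d"]) (auto simp: field_simps)
  have "((\<lambda>y. (f y - f t) / (y - t)) \<longlongrightarrow> a) (at t within {t<..})"
    by (rule tendsto_eventually[OF ev])
  then show 1: "(f has_real_derivative a) (at t within {t<..})"
    unfolding has_field_derivative_iff .
  show "rderiv f t = a"
    unfolding rderiv_def
  proof (rule the_equality)
    show "(f has_real_derivative a) (at t within {t<..})" by (rule 1)
    fix m assume "(f has_real_derivative m) (at t within {t<..})"
    then show "m = a" using has_field_derivative_unique[OF _ 1] by simp
  qed
qed

lemma lderiv_lin:
  assumes d: "d > 0" and f: "\<forall>u\<in>{t-d<..t}. f u = a * u + c"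
  shows "(f has_real_derivative a) (at t within {..<t})" "lderiv f t = a"
proof -
  have ev: "eventually (\<lambda>y. (f y - f t) / (y - t) = a) (at t within {..<t})"
  proof -
    have "eventually (\<lambda>y. (f y - f t) / (y - t) = a) (at_left t)"
      unfolding eventually_at_left_field
      using d f by (intro exI[of _ "t - d"]) (auto simp: field_simps)
    then show ?thesis by simp
  qed
  have "((\<lambda>y. (f y - f t) / (y - t)) \<longlongrightarrow> a) (at t within {..<t})"
    by (rule tendsto_eventually[OF ev])
  then show 1: "(f has_real_derivative a) (at t within {..<t})"
    unfolding has_field_derivative_iff .
  show "lderiv f t = a"
    unfolding lderiv_def
  proof (rule the_equality)
    show "(f has_real_derivative a) (at t within {..<t})" by (rule 1)
    fix m assume "(f has_real_derivative m) (at t within {..<t})"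
    then show "m = a" using has_field_derivative_unique[OF _ 1] by simp
  qed
qed

definition eform :: "real \<Rightarrow> real \<Rightarrow> real \<Rightarrow> real \<Rightarrow> real \<Rightarrow> real \<Rightarrow> real \<Rightarrow> real" where
  "eform \<alpha> \<beta> g1 b1 g2 b2 t = \<alpha> + \<beta> * t + g1 * \<bar>t - b1\<bar> + g2 * \<bar>t - b2\<bar>"

definition sR :: "real \<Rightarrow> real \<Rightarrow> real" where "sR t b = (if b \<le> t then 1 else -1)"
definition sL :: "real \<Rightarrow> real \<Rightarrow> real" where "sL t b = (if b < t then 1 else -1)"

lemma abs_R: "b \<le> t \<Longrightarrow> t \<le> u \<Longrightarrow> \<bar>u - b\<bar> = sR t b * u - sR t b * b"
  "t < b \<Longrightarrow> u \<le> b \<Longrightarrow> \<bar>u - b\<bar> = sR t b * u - sR t b * b"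
  by (auto simp: sR_def)

lemma eform_rderiv:
  assumes "0 \<le> t" "t < l" "\<forall>u\<in>{0..l}. f u = eform \<alpha> \<beta> g1 b1 g2 b2 u"
  shows "rderiv f t = \<beta> + g1 * sR t b1 + g2 * sR t b2"
proof -
  define d where "d = min (l - t) (min (if b1 > t then b1 - t else 1) (if b2 > t then b2 - t else 1))"
  have d: "d > 0" using assms(2) unfolding d_def by auto
  have "\<forall>u\<in>{t..<t+d}. f u = (\<beta> + g1 * sR t b1 + g2 * sR t b2) * u + (\<alpha> - g1 * sR t b1 * b1 - g2 * sR t b2 * b2)"
  proof
    fix u assume u: "u \<in> {t..<t+d}"
    then have u0: "u \<in> {0..l}" using assms d_def by auto
    have a1: "\<bar>u - b1\<bar> = sR t b1 * u - sR t b1 * b1"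
    proof (cases "b1 \<le> t")
      case True show ?thesis by (rule abs_R(1)) (use u True in auto)
    next
      case False then have "u \<le> b1" using u d_def by auto
      show ?thesis by (rule abs_R(2)) (use False \<open>u \<le> b1\<close> in auto)
    qed
    have a2: "\<bar>u - b2\<bar> = sR t b2 * u - sR t b2 * b2"
    proof (cases "b2 \<le> t")
      case True show ?thesis by (rule abs_R(1)) (use u True in auto)
    next
      case False then have "u \<le> b2" using u d_def by auto
      show ?thesis by (rule abs_R(2)) (use False \<open>u \<le> b2\<close> in auto)
    qed
    have "f u = eform \<alpha> \<beta> g1 b1 g2 b2 u" using assms(3) u0 by auto
    also have "\<dots> = (\<beta> + g1 * sR t b1 + g2 * sR t b2) * u + (\<alpha> - g1 * sR t b1 * b1 - g2 * sR t b2 * b2)"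
      unfolding eform_def a1 a2 by (simp add: algebra_simps)
    finally show "f u = (\<beta> + g1 * sR t b1 + g2 * sR t b2) * u + (\<alpha> - g1 * sR t b1 * b1 - g2 * sR t b2 * b2)" .
  qed
  from rderiv_lin(2)[OF d this] show ?thesis .
qed

lemma abs_L: "b < t \<Longrightarrow> b \<le> u \<Longrightarrow> \<bar>u - b\<bar> = sL t b * u - sL t b * b"
  "t \<le> b \<Longrightarrow> u \<le> b \<Longrightarrow> \<bar>u - b\<bar> = sL t b * u - sL t b * b"
  by (auto simp: sL_def)

lemma eform_lderiv:
  assumes "0 < t" "t \<le> l" "\<forall>u\<in>{0..l}. f u = eform \<alpha> \<beta> g1 b1 g2 b2 u"
  shows "lderiv f t = \<beta> + g1 * sL t b1 + g2 * sL t b2"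
proof -
  define d where "d = min t (min (if b1 < t then t - b1 else 1) (if b2 < t then t - b2 else 1))"
  have d: "d > 0" using assms(1) unfolding d_def by auto
  have "\<forall>u\<in>{t-d<..t}. f u = (\<beta> + g1 * sL t b1 + g2 * sL t b2) * u + (\<alpha> - g1 * sL t b1 * b1 - g2 * sL t b2 * b2)"
  proof
    fix u assume u: "u \<in> {t-d<..t}"
    then have u0: "u \<in> {0..l}" using assms d_def by auto
    have a1: "\<bar>u - b1\<bar> = sL t b1 * u - sL t b1 * b1"
    proof (cases "b1 < t")
      case True then have "b1 \<le> u" using u d_def by auto
      show ?thesis by (rule abs_L(1)) (use True \<open>b1 \<le> u\<close> in auto)
    next
      case False show ?thesis by (rule abs_L(2)) (use u False in auto)
    qed
    have a2: "\<bar>u - b2\<bar> = sL t b2 * u - sL t b2 * b2"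
    proof (cases "b2 < t")
      case True then have "b2 \<le> u" using u d_def by auto
      show ?thesis by (rule abs_L(1)) (use True \<open>b2 \<le> u\<close> in auto)
    next
      case False show ?thesis by (rule abs_L(2)) (use u False in auto)
    qed
    have "f u = eform \<alpha> \<beta> g1 b1 g2 b2 u" using assms(3) u0 by auto
    also have "\<dots> = (\<beta> + g1 * sL t b1 + g2 * sL t b2) * u + (\<alpha> - g1 * sL t b1 * b1 - g2 * sL t b2 * b2)"
      unfolding eform_def a1 a2 by (simp add: algebra_simps)
    finally show "f u = (\<beta> + g1 * sL t b1 + g2 * sL t b2) * u + (\<alpha> - g1 * sL t b1 * b1 - g2 * sL t b2 * b2)" .
  qed
  from lderiv_lin(2)[OF d this] show ?thesis .
qed

lemma eform_PL:
  assumes "\<forall>u\<in>{0..l}. f u = eform \<alpha> \<beta> g1 b1 g2 b2 u"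
  shows "PL_on l f"
  unfolding PL_on_def
proof (intro exI[of _ "{b1, b2} \<inter> {0<..<l}"] conjI allI impI)
  fix a b assume ab: "0 \<le> a \<and> a < b \<and> b \<le> l \<and> {a<..<b} \<inter> ({b1, b2} \<inter> {0<..<l}) = {}"
  define s1 where "s1 = (if b1 \<le> a then 1 else -1::real)"
  define s2 where "s2 = (if b2 \<le> a then 1 else -1::real)"
  have n1: "b1 \<le> a \<or> b \<le> b1"
  proof (rule ccontr)
    assume "\<not> (b1 \<le> a \<or> b \<le> b1)"
    then have "b1 \<in> {a<..<b}" "b1 \<in> {b1, b2} \<inter> {0<..<l}" using ab by auto
    then show False using ab by blast
  qed
  have n2: "b2 \<le> a \<or> b \<le> b2"
  proof (rule ccontr)
    assume "\<not> (b2 \<le> a \<or> b \<le> b2)"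
    then have "b2 \<in> {a<..<b}" "b2 \<in> {b1, b2} \<inter> {0<..<l}" using ab by auto
    then show False using ab by blast
  qed
  show "\<exists>m c. \<forall>t\<in>{a..b}. f t = m * t + c"
  proof (intro exI ballI)
    fix t assume t: "t \<in> {a..b}"
    have a1: "\<bar>t - b1\<bar> = s1 * t - s1 * b1" using n1 t ab unfolding s1_def by auto
    have a2: "\<bar>t - b2\<bar> = s2 * t - s2 * b2" using n2 t ab unfolding s2_def by auto
    have "f t = eform \<alpha> \<beta> g1 b1 g2 b2 t" using assms t ab by auto
    also have "\<dots> = (\<beta> + g1 * s1 + g2 * s2) * t + (\<alpha> - g1 * s1 * b1 - g2 * s2 * b2)"
      unfolding eform_def a1 a2 by (simp add: algebra_simps)
    finally show "f t = (\<beta> + g1 * s1 + g2 * s2) * t + (\<alpha> - g1 * s1 * b1 - g2 * s2 * b2)" .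
  qed
qed auto


lemma PL_right_lin:
  assumes "PL_on l f" "0 \<le> t" "t < l"
  shows "\<exists>a c d. d > 0 \<and> (\<forall>u\<in>{t..<t+d}. f u = a * u + c)"
proof -
  from assms(1)[unfolded PL_on_def] obtain K where K: "finite K" "K \<subseteq> {0<..<l}"
    and lin0: "\<forall>a b. 0 \<le> a \<and> a < b \<and> b \<le> l \<and> {a<..<b} \<inter> K = {} \<longrightarrow> (\<exists>m c. \<forall>t\<in>{a..b}. f t = m * t + c)"
    by blast
  have lin: "\<And>a b. 0 \<le> a \<Longrightarrow> a < b \<Longrightarrow> b \<le> l \<Longrightarrow> {a<..<b} \<inter> K = {} \<Longrightarrow> \<exists>m c. \<forall>t\<in>{a..b}. f t = m * t + c"
    using lin0 by blast
  define b where "b = Min (insert l {k\<in>K. k > t})"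
  have fin: "finite (insert l {k\<in>K. k > t})" using K by auto
  have bt: "b > t" unfolding b_def using Min_gr_iff[OF fin] assms by auto
  have bl: "b \<le> l" unfolding b_def using Min_le[OF fin] by auto
  have disj: "{t<..<b} \<inter> K = {}"
  proof (rule ccontr)
    assume "{t<..<b} \<inter> K \<noteq> {}"
    then obtain k where k: "k \<in> K" "t < k" "k < b" by auto
    then have "b \<le> k" unfolding b_def using Min_le[OF fin] by auto
    then show False using k by auto
  qed
  obtain m c where mc: "\<forall>u\<in>{t..b}. f u = m * u + c" using lin[OF assms(2) bt bl disj] by auto
  show ?thesis using mc bt by (intro exI[of _ m] exI[of _ c] exI[of _ "b - t"]) auto
qed


lemma PL_left_lin:
  assumes "PL_on l f" "0 < t" "t \<le> l"
  shows "\<exists>a c d. d > 0 \<and> (\<forall>u\<in>{t-d<..t}. f u = a * u + c)"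
proof -
  from assms(1)[unfolded PL_on_def] obtain K where K: "finite K" "K \<subseteq> {0<..<l}"
    and lin0: "\<forall>a b. 0 \<le> a \<and> a < b \<and> b \<le> l \<and> {a<..<b} \<inter> K = {} \<longrightarrow> (\<exists>m c. \<forall>t\<in>{a..b}. f t = m * t + c)"
    by blast
  have lin: "\<And>a b. 0 \<le> a \<Longrightarrow> a < b \<Longrightarrow> b \<le> l \<Longrightarrow> {a<..<b} \<inter> K = {} \<Longrightarrow> \<exists>m c. \<forall>t\<in>{a..b}. f t = m * t + c"
    using lin0 by blast
  define b where "b = Max (insert 0 {k\<in>K. k < t})"
  have fin: "finite (insert 0 {k\<in>K. k < t})" using K by auto
  have bt: "b < t" unfolding b_def using Max_less_iff[OF fin] assms by auto
  have bl: "0 \<le> b" unfolding b_def using Max_ge[OF fin] by auto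
  have disj: "{b<..<t} \<inter> K = {}"
  proof (rule ccontr)
    assume "{b<..<t} \<inter> K \<noteq> {}"
    then obtain k where k: "k \<in> K" "b < k" "k < t" by auto
    then have "k \<le> b" unfolding b_def using Max_ge[OF fin] by auto
    then show False using k by auto
  qed
  obtain m c where mc: "\<forall>u\<in>{b..t}. f u = m * u + c" using lin[OF bl bt assms(3) disj] by auto
  show ?thesis using mc bt by (intro exI[of _ m] exI[of _ c] exI[of _ "t - b"]) auto
qed

lemma PL_rderiv_ex:
  assumes "PL_on l f" "0 \<le> t" "t < l"
  shows "(f has_real_derivative rderiv f t) (at t within {t<..})"
proof -
  obtain a c d where "d > 0" and h: "\<forall>u\<in>{t..<t+d}. f u = a * u + c"
    using PL_right_lin[OF assms] by blast
  show ?thesis using rderiv_lin[OF \<open>d > 0\<close> h] by simp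
qed

lemma PL_lderiv_ex:
  assumes "PL_on l f" "0 < t" "t \<le> l"
  shows "(f has_real_derivative lderiv f t) (at t within {..<t})"
proof -
  obtain a c d where "d > 0" and h: "\<forall>u\<in>{t-d<..t}. f u = a * u + c"
    using PL_left_lin[OF assms] by blast
  show ?thesis using lderiv_lin[OF \<open>d > 0\<close> h] by simp
qed




lemma rderiv_eq: assumes "(f has_real_derivative a) (at t within {t<..})" shows "rderiv f t = a"
  unfolding rderiv_def
proof (rule the_equality)
  show "(f has_real_derivative a) (at t within {t<..})" by (rule assms)
  fix m assume "(f has_real_derivative m) (at t within {t<..})"
  then show "m = a" using has_field_derivative_unique[OF _ assms] by simp
qed
lemma lderiv_eq: assumes "(f has_real_derivative a) (at t within {..<t})" shows "lderiv f t = a"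
  unfolding lderiv_def
proof (rule the_equality)
  show "(f has_real_derivative a) (at t within {..<t})" by (rule assms)
  fix m assume "(f has_real_derivative m) (at t within {..<t})"
  then show "m = a" using has_field_derivative_unique[OF _ assms] by simp
qed

lemma rderiv_diff:
  assumes "(f has_real_derivative rderiv f t) (at t within {t<..})" "(g has_real_derivative rderiv g t) (at t within {t<..})"
  shows "rderiv (\<lambda>x. f x - g x) t = rderiv f t - rderiv g t"
proof -
  have 1: "((\<lambda>x. f x - g x) has_real_derivative rderiv f t - rderiv g t) (at t within {t<..})"
    using DERIV_diff[OF assms] .
  show ?thesis by (rule rderiv_eq[OF 1])
qed

lemma lderiv_diff:
  assumes "(f has_real_derivative lderiv f t) (at t within {..<t})" "(g has_real_derivative lderiv g t) (at t within {..<t})"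
  shows "lderiv (\<lambda>x. f x - g x) t = lderiv f t - lderiv g t"
proof -
  have 1: "((\<lambda>x. f x - g x) has_real_derivative lderiv f t - lderiv g t) (at t within {..<t})"
    using DERIV_diff[OF assms] .
  show ?thesis by (rule lderiv_eq[OF 1])
qed

lemma PL_diff:
  assumes "PL_on l f" "PL_on l g"
  shows "PL_on l (\<lambda>x. f x - g x)"
proof -
  from assms(1)[unfolded PL_on_def] obtain K1 where K1: "finite K1" "K1 \<subseteq> {0<..<l}"
    and lin1: "\<forall>a b. 0 \<le> a \<and> a < b \<and> b \<le> l \<and> {a<..<b} \<inter> K1 = {} \<longrightarrow> (\<exists>m c. \<forall>t\<in>{a..b}. f t = m * t + c)"
    by blast
  from assms(2)[unfolded PL_on_def] obtain K2 where K2: "finite K2" "K2 \<subseteq> {0<..<l}"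
    and lin2: "\<forall>a b. 0 \<le> a \<and> a < b \<and> b \<le> l \<and> {a<..<b} \<inter> K2 = {} \<longrightarrow> (\<exists>m c. \<forall>t\<in>{a..b}. g t = m * t + c)"
    by blast
  show ?thesis unfolding PL_on_def
  proof (intro exI[of _ "K1 \<union> K2"] conjI allI impI)
    fix a b assume ab: "0 \<le> a \<and> a < b \<and> b \<le> l \<and> {a<..<b} \<inter> (K1 \<union> K2) = {}"
    obtain m1 c1 where 1: "\<forall>t\<in>{a..b}. f t = m1 * t + c1" using lin1 ab by blast
    obtain m2 c2 where 2: "\<forall>t\<in>{a..b}. g t = m2 * t + c2" using lin2 ab by blast
    show "\<exists>m c. \<forall>t\<in>{a..b}. f t - g t = m * t + c"
      using 1 2 by (intro exI[of _ "m1 - m2"] exI[of _ "c1 - c2"]) (auto simp: algebra_simps)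
  qed (use K1 K2 in auto)
qed


lemma lin_glue:
  assumes "finite K"
  shows "lo < hi \<Longrightarrow> (\<forall>a b. lo \<le> a \<and> a < b \<and> b \<le> hi \<and> {a<..<b} \<inter> K = {} \<longrightarrow> (\<exists>m c. \<forall>t\<in>{a..b}. f t = m * t + c))
    \<Longrightarrow> (\<forall>t\<in>{lo<..<hi}. rderiv f t = lderiv f t) \<Longrightarrow> \<exists>m c. \<forall>t\<in>{lo..hi}. f t = m * t + c"
  using assms
proof (induction K arbitrary: lo hi rule: finite_induct)
  case empty
  then show ?case by auto
next
  case (insert k K)
  show ?case
  proof (cases "k \<in> {lo<..<hi}")
    case False
    have "\<forall>a b. lo \<le> a \<and> a < b \<and> b \<le> hi \<and> {a<..<b} \<inter> K = {} \<longrightarrow> (\<exists>m c. \<forall>t\<in>{a..b}. f t = m * t + c)"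
    proof (intro allI impI)
      fix a b assume ab: "lo \<le> a \<and> a < b \<and> b \<le> hi \<and> {a<..<b} \<inter> K = {}"
      then have "{a<..<b} \<inter> insert k K = {}" using False by auto
      then show "\<exists>m c. \<forall>t\<in>{a..b}. f t = m * t + c" using insert.prems(2) ab by blast
    qed
    then show ?thesis using insert by blast
  next
    case True
    have h1: "\<forall>a b. lo \<le> a \<and> a < b \<and> b \<le> k \<and> {a<..<b} \<inter> K = {} \<longrightarrow> (\<exists>m c. \<forall>t\<in>{a..b}. f t = m * t + c)"
    proof (intro allI impI)
      fix a b assume ab: "lo \<le> a \<and> a < b \<and> b \<le> k \<and> {a<..<b} \<inter> K = {}"
      then have "{a<..<b} \<inter> insert k K = {}" by auto
      then show "\<exists>m c. \<forall>t\<in>{a..b}. f t = m * t + c" using insert.prems(2) ab True by auto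
    qed
    have h2: "\<forall>a b. k \<le> a \<and> a < b \<and> b \<le> hi \<and> {a<..<b} \<inter> K = {} \<longrightarrow> (\<exists>m c. \<forall>t\<in>{a..b}. f t = m * t + c)"
    proof (intro allI impI)
      fix a b assume ab: "k \<le> a \<and> a < b \<and> b \<le> hi \<and> {a<..<b} \<inter> K = {}"
      then have "{a<..<b} \<inter> insert k K = {}" by auto
      then show "\<exists>m c. \<forall>t\<in>{a..b}. f t = m * t + c" using insert.prems(2) ab True by auto
    qed
    obtain m1 c1 where 1: "\<forall>t\<in>{lo..k}. f t = m1 * t + c1"
      using insert.IH[of lo k] h1 True insert.prems(3) insert.hyps by auto
    obtain m2 c2 where 2: "\<forall>t\<in>{k..hi}. f t = m2 * t + c2"
      using insert.IH[of k hi] h2 True insert.prems(3) insert.hyps by auto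
    have l: "lderiv f k = m1" by (rule lderiv_lin(2)[of "k - lo"]) (use 1 True in auto)
    have r: "rderiv f k = m2" by (rule rderiv_lin(2)[of "hi - k"]) (use 2 True in auto)
    have m: "m1 = m2" using l r insert.prems(3) True by auto
    have c: "c1 = c2" using 1 2 True m by (metis atLeastAtMost_iff greaterThanLessThan_iff less_eq_real_def add_left_cancel)
    have "\<forall>t\<in>{lo..hi}. f t = m1 * t + c1"
    proof
      fix t assume "t \<in> {lo..hi}"
      then show "f t = m1 * t + c1" using 1 2 m c by (cases "t \<le> k") auto
    qed
    then show ?thesis by blast
  qed
qed

lemma PL_harm_linear:
  assumes "PL_on l f" "l > 0" "\<forall>t\<in>{0<..<l}. rderiv f t = lderiv f t"
  shows "\<exists>m c. \<forall>t\<in>{0..l}. f t = m * t + c"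
proof -
  obtain K where K: "finite K" "K \<subseteq> {0<..<l}"
    and lin: "\<forall>a b. 0 \<le> a \<and> a < b \<and> b \<le> l \<and> {a<..<b} \<inter> K = {} \<longrightarrow> (\<exists>m c. \<forall>t\<in>{a..b}. f t = m * t + c)"
    using assms(1)[unfolded PL_on_def] by blast
  show ?thesis using lin_glue[OF K(1) assms(2) lin assms(3)] .
qed



context mg begin

definition w0 :: 'v where "w0 = (SOME v. v \<in> V)"

lemma w0V: "w0 \<in> V" unfolding w0_def using Vne by (simp add: some_in_eq)

definition Kf :: "'v \<Rightarrow> 'v \<Rightarrow> real" where
  "Kf u = (SOME k. (\<forall>v\<in>V. lap k v = (if v = w0 then 1 else 0) - (if v = u then 1 else 0)) \<and> k w0 = 0)"

lemma Kf_prop: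
  assumes "u \<in> V"
  shows "\<forall>v\<in>V. lap (Kf u) v = (if v = w0 then 1 else 0) - (if v = u then 1 else 0)" "Kf u w0 = 0"
proof -
  have "(\<Sum>v\<in>V. (if v = w0 then 1 else 0) - (if v = u then 1 else (0::real))) = 0"
    using assms w0V finV by (simp add: sum_subtractf)
  from solve_lap[OF w0V this]
  have "\<exists>k. (\<forall>v\<in>V. lap k v = (if v = w0 then 1 else 0) - (if v = u then 1 else 0)) \<and> k w0 = 0" .
  from someI_ex[OF this] show "\<forall>v\<in>V. lap (Kf u) v = (if v = w0 then 1 else 0) - (if v = u then 1 else 0)" "Kf u w0 = 0"
    unfolding Kf_def by auto
qed

lemma green_disc: "(\<Sum>v\<in>V. f v * lap g v) = - (\<Sum>e\<in>E. (f (snd e) - f (fst e)) * (g (snd e) - g (fst e)) / L e)"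
proof -
  have "(\<Sum>v\<in>V. f v * lap g v) = (\<Sum>v\<in>V. \<Sum>e\<in>{e\<in>E. fst e = v}. f (fst e) * ((g (snd e) - g (fst e)) / L e))
      + (\<Sum>v\<in>V. \<Sum>e\<in>{e\<in>E. snd e = v}. f (snd e) * ((g (fst e) - g (snd e)) / L e))"
    unfolding lap_alt by (simp add: distrib_left sum_distrib_left sum.distrib)
  also have "\<dots> = (\<Sum>e\<in>E. f (fst e) * ((g (snd e) - g (fst e)) / L e)) + (\<Sum>e\<in>E. f (snd e) * ((g (fst e) - g (snd e)) / L e))"
    unfolding group_fst group_snd ..
  also have "\<dots> = - (\<Sum>e\<in>E. (f (snd e) - f (fst e)) * (g (snd e) - g (fst e)) / L e)"
    unfolding sum.distrib[symmetric] sum_negf[symmetric]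
  proof (rule sum.cong)
    fix e assume "e \<in> E"
    then have "L e \<noteq> 0" using Lpos[of e] by linarith
    then show "f (fst e) * ((g (snd e) - g (fst e)) / L e) + f (snd e) * ((g (fst e) - g (snd e)) / L e) =
      - ((f (snd e) - f (fst e)) * (g (snd e) - g (fst e)) / L e)" by (simp add: field_simps)
  qed simp
  finally show ?thesis .
qed

lemma green_sym: "(\<Sum>v\<in>V. f v * lap g v) = (\<Sum>v\<in>V. g v * lap f v)"
  unfolding green_disc by (simp add: mult.commute)

lemma Kf_sym: assumes "a \<in> V" "b \<in> V" shows "Kf a b = Kf b a"
proof -
  have 1: "(\<Sum>v\<in>V. Kf a v * lap (Kf b) v) = - Kf a b"
  proof -
    have "(\<Sum>v\<in>V. Kf a v * lap (Kf b) v) = (\<Sum>v\<in>V. Kf a v * ((if v = w0 then 1 else 0) - (if v = b then 1 else 0)))"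
      using Kf_prop(1)[OF assms(2)] by (intro sum.cong) auto
    also have "\<dots> = (\<Sum>v\<in>V. (if v = w0 then Kf a v else 0) - (if v = b then Kf a v else 0))"
      by (intro sum.cong) auto
    also have "\<dots> = (\<Sum>v\<in>V. (if v = w0 then Kf a v else 0)) - (\<Sum>v\<in>V. (if v = b then Kf a v else 0))"
      by (rule sum_subtractf)
    also have "\<dots> = Kf a w0 - Kf a b" using finV w0V assms by simp
    finally show ?thesis using Kf_prop(2)[OF assms(1)] by simp
  qed
  have 2: "(\<Sum>v\<in>V. Kf b v * lap (Kf a) v) = - Kf b a"
  proof -
    have "(\<Sum>v\<in>V. Kf b v * lap (Kf a) v) = (\<Sum>v\<in>V. Kf b v * ((if v = w0 then 1 else 0) - (if v = a then 1 else 0)))"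
      using Kf_prop(1)[OF assms(1)] by (intro sum.cong) auto
    also have "\<dots> = (\<Sum>v\<in>V. (if v = w0 then Kf b v else 0) - (if v = a then Kf b v else 0))"
      by (intro sum.cong) auto
    also have "\<dots> = (\<Sum>v\<in>V. (if v = w0 then Kf b v else 0)) - (\<Sum>v\<in>V. (if v = a then Kf b v else 0))"
      by (rule sum_subtractf)
    also have "\<dots> = Kf b w0 - Kf b a" using finV w0V assms by simp
    finally show ?thesis using Kf_prop(2)[OF assms(2)] by simp
  qed
  show ?thesis using 1 2 green_sym[of "Kf a" "Kf b"] by simp
qed

end


context mg begin

definition ton :: "'v mpt \<Rightarrow> 'v \<times> 'v \<Rightarrow> bool" where
  "ton x e = (case x of Inner e' s \<Rightarrow> e' = e | Vert _ \<Rightarrow> False)"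
definition tpos :: "'v mpt \<Rightarrow> real" where
  "tpos x = (case x of Inner e' s \<Rightarrow> s | Vert _ \<Rightarrow> 0)"
definition vval :: "'v mpt \<Rightarrow> 'v \<Rightarrow> real" where
  "vval x u = (case x of Vert v \<Rightarrow> Kf v u | Inner e s \<Rightarrow> (1 - s / L e) * Kf (fst e) u + (s / L e) * Kf (snd e) u)"
definition tentx :: "'v mpt \<Rightarrow> 'v \<times> 'v \<Rightarrow> real \<Rightarrow> real" where
  "tentx x e t = (if ton x e then (tpos x + t - \<bar>t - tpos x\<bar>) / 2 - tpos x * t / L e else 0)"
definition edgeY :: "'v mpt \<Rightarrow> 'v \<times> 'v \<Rightarrow> real \<Rightarrow> real" where
  "edgeY x e t = vval x (fst e) + (vval x (snd e) - vval x (fst e)) * t / L e + tentx x e t"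
definition Yp :: "'v mpt \<Rightarrow> 'v mpt \<Rightarrow> real" where
  "Yp x z = (case z of Vert u \<Rightarrow> if u \<in> V then vval x u else 0
     | Inner e t \<Rightarrow> if e \<in> E \<and> 0 < t \<and> t < L e then edgeY x e t else 0)"

lemma ton_simps[simp]: "ton (Vert v) e = False" "ton (Inner e' s) e = (e' = e)"
  unfolding ton_def by auto
lemma tpos_simps[simp]: "tpos (Vert v) = 0" "tpos (Inner e' s) = s"
  unfolding tpos_def by auto
lemma vval_simps[simp]: "vval (Vert v) u = Kf v u"
  "vval (Inner e s) u = (1 - s / L e) * Kf (fst e) u + (s / L e) * Kf (snd e) u"
  unfolding vval_def by auto
lemma Yp_simps[simp]: "Yp x (Vert u) = (if u \<in> V then vval x u else 0)"
  "Yp x (Inner e t) = (if e \<in> E \<and> 0 < t \<and> t < L e then edgeY x e t else 0)"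
  unfolding Yp_def by auto

lemma points_iff: "x \<in> points V E L \<longleftrightarrow> (\<exists>v\<in>V. x = Vert v) \<or> (\<exists>e t. e \<in> E \<and> 0 < t \<and> t < L e \<and> x = Inner e t)"
  unfolding points_def by auto

lemma Vert_points[simp]: "Vert v \<in> points V E L \<longleftrightarrow> v \<in> V"
  unfolding points_def by auto
lemma Inner_points[simp]: "Inner e t \<in> points V E L \<longleftrightarrow> e \<in> E \<and> 0 < t \<and> t < L e"
  unfolding points_def by blast

lemma pt_in_points: "e \<in> E \<Longrightarrow> 0 \<le> t \<Longrightarrow> t \<le> L e \<Longrightarrow> pt_of L e t \<in> points V E L"
  unfolding pt_of_def using fstE sndE by auto

lemma ton_pos: "x \<in> points V E L \<Longrightarrow> ton x e \<Longrightarrow> e \<in> E \<and> 0 < tpos x \<and> tpos x < L e \<and> x = Inner e (tpos x)"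
  by (cases x) auto

lemma tentx_0: "x \<in> points V E L \<Longrightarrow> tentx x e 0 = 0"
  unfolding tentx_def using ton_pos[of x e] by auto

lemma tentx_L: "x \<in> points V E L \<Longrightarrow> tentx x e (L e) = 0"
  unfolding tentx_def using ton_pos[of x e] by auto

lemma Yp_pt: assumes "x \<in> points V E L" "e \<in> E" "0 \<le> t" "t \<le> L e"
  shows "Yp x (pt_of L e t) = edgeY x e t"
proof -
  have Le: "L e > 0" using Lpos assms by auto
  consider "t = 0" | "t = L e" | "0 < t \<and> t < L e" using assms by linarith
  then show ?thesis
  proof cases
    case 1
    then show ?thesis using tentx_0[OF assms(1)] fstE[OF assms(2)] unfolding pt_of_def edgeY_def by simp
  next
    case 2
    then show ?thesis using tentx_L[OF assms(1)] sndE[OF assms(2)] Le unfolding pt_of_def edgeY_def by simp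
  next
    case 3
    then show ?thesis using assms unfolding pt_of_def by simp
  qed
qed

lemma edgeY_eform: "edgeY x e t = eform (vval x (fst e) + (if ton x e then tpos x / 2 else 0))
   ((vval x (snd e) - vval x (fst e)) / L e + (if ton x e then 1/2 - tpos x / L e else 0))
   (if ton x e then - 1/2 else 0) (tpos x) 0 0 t"
  unfolding edgeY_def eform_def tentx_def by (auto simp: field_simps)

definition Fv :: "'v mpt \<Rightarrow> 'v mpt \<Rightarrow> 'v mpt \<Rightarrow> real" where
  "Fv z y x = (if x \<in> points V E L then Yp y x - Yp z x - Yp y z + Yp z z else 0)"

lemma Fv_edge: assumes "y \<in> points V E L" "z \<in> points V E L" "e \<in> E" "0 \<le> t" "t \<le> L e"
  shows "Fv z y (pt_of L e t) = eform
    (vval y (fst e) + (if ton y e then tpos y / 2 else 0) - (vval z (fst e) + (if ton z e then tpos z / 2 else 0)) - Yp y z + Yp z z)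
    ((vval y (snd e) - vval y (fst e)) / L e + (if ton y e then 1/2 - tpos y / L e else 0)
      - ((vval z (snd e) - vval z (fst e)) / L e + (if ton z e then 1/2 - tpos z / L e else 0)))
    (if ton y e then - 1/2 else 0) (tpos y) (- (if ton z e then - 1/2 else 0)) (tpos z) t"
  using Yp_pt[OF assms(1,3-5)] Yp_pt[OF assms(2,3-5)] pt_in_points[OF assms(3-5)]
  unfolding Fv_def edgeY_eform by (simp add: eform_def algebra_simps)

lemma Fv_edge_all: assumes "y \<in> points V E L" "z \<in> points V E L" "e \<in> E"
  shows "\<forall>t\<in>{0..L e}. Fv z y (pt_of L e t) = eform
    (vval y (fst e) + (if ton y e then tpos y / 2 else 0) - (vval z (fst e) + (if ton z e then tpos z / 2 else 0)) - Yp y z + Yp z z)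
    ((vval y (snd e) - vval y (fst e)) / L e + (if ton y e then 1/2 - tpos y / L e else 0)
      - ((vval z (snd e) - vval z (fst e)) / L e + (if ton z e then 1/2 - tpos z / L e else 0)))
    (if ton y e then - 1/2 else 0) (tpos y) (- (if ton z e then - 1/2 else 0)) (tpos z) t"
  using Fv_edge[OF assms] by auto

definition sl0 :: "'v mpt \<Rightarrow> 'v \<times> 'v \<Rightarrow> real" where
  "sl0 x e = (vval x (snd e) - vval x (fst e)) / L e + (if ton x e then 1 - tpos x / L e else 0)"
definition slL :: "'v mpt \<Rightarrow> 'v \<times> 'v \<Rightarrow> real" where
  "slL x e = (vval x (snd e) - vval x (fst e)) / L e - (if ton x e then tpos x / L e else 0)"

lemma Fv_rderiv0: assumes "y \<in> points V E L" "z \<in> points V E L" "e \<in> E"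
  shows "rderiv (\<lambda>t. Fv z y (pt_of L e t)) 0 = sl0 y e - sl0 z e"
proof -
  have Le: "L e > 0" using Lpos assms by auto
  note r = eform_rderiv[OF _ _ Fv_edge_all[OF assms], of 0]
  show ?thesis
    using r Le ton_pos[OF assms(1), of e] ton_pos[OF assms(2), of e] unfolding sl0_def sR_def
    by (cases "ton y e"; cases "ton z e") (auto simp: algebra_simps)
qed

lemma Fv_lderivL: assumes "y \<in> points V E L" "z \<in> points V E L" "e \<in> E"
  shows "lderiv (\<lambda>t. Fv z y (pt_of L e t)) (L e) = slL y e - slL z e"
proof -
  have Le: "L e > 0" using Lpos assms by auto
  note r = eform_lderiv[OF _ _ Fv_edge_all[OF assms], of "L e"]
  show ?thesis
    using r Le ton_pos[OF assms(1), of e] ton_pos[OF assms(2), of e] unfolding slL_def sL_def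
    by (cases "ton y e"; cases "ton z e") (auto simp: algebra_simps)
qed

lemma Fv_inner: assumes "y \<in> points V E L" "z \<in> points V E L" "e \<in> E" "0 < t" "t < L e"
  shows "rderiv (\<lambda>s. Fv z y (pt_of L e s)) t - lderiv (\<lambda>s. Fv z y (pt_of L e s)) t
     = (if z = Inner e t then 1 else 0) - (if y = Inner e t then 1 else 0)"
proof -
  note r = eform_rderiv[OF _ _ Fv_edge_all[OF assms(1-3)], of t]
  note l = eform_lderiv[OF _ _ Fv_edge_all[OF assms(1-3)], of t]
  show ?thesis using r l assms
    using ton_pos[OF assms(1), of e] ton_pos[OF assms(2), of e] unfolding sL_def sR_def
    by (cases y; cases z) (auto split: if_splits)
qed

lemma Fv_PL: assumes "y \<in> points V E L" "z \<in> points V E L" "e \<in> E"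
  shows "PL_on (L e) (\<lambda>t. Fv z y (pt_of L e t))"
  by (rule eform_PL[OF Fv_edge_all[OF assms]])

end


context mg begin

lemma finFst: "finite {e\<in>E. fst e = v}" and finSnd: "finite {e\<in>E. snd e = v}"
  using finE by auto

lemma vsum_lemma: assumes x: "x \<in> points V E L" and v: "v \<in> V"
  shows "(\<Sum>e\<in>{e\<in>E. fst e = v}. sl0 x e) + (\<Sum>e\<in>{e\<in>E. snd e = v}. - slL x e)
     = (if v = w0 then 1 else 0) - (if x = Vert v then 1 else 0)"
proof -
  define T0 where "T0 e = (if ton x e then 1 - tpos x / L e else 0)" for e
  define T1 where "T1 e = (if ton x e then tpos x / L e else 0)" for e
  have a: "(\<Sum>e\<in>{e\<in>E. fst e = v}. sl0 x e) = (\<Sum>e\<in>{e\<in>E. fst e = v}. (vval x (snd e) - vval x (fst e)) / L e) + (\<Sum>e\<in>{e\<in>E. fst e = v}. T0 e)"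
    unfolding sl0_def T0_def sum.distrib ..
  have b: "(\<Sum>e\<in>{e\<in>E. snd e = v}. - slL x e) = (\<Sum>e\<in>{e\<in>E. snd e = v}. (vval x (fst e) - vval x (snd e)) / L e) + (\<Sum>e\<in>{e\<in>E. snd e = v}. T1 e)"
    unfolding slL_def T1_def sum.distrib[symmetric] by (rule sum.cong) (auto simp: diff_divide_distrib)
  have lsum: "(\<Sum>e\<in>{e\<in>E. fst e = v}. sl0 x e) + (\<Sum>e\<in>{e\<in>E. snd e = v}. - slL x e)
      = lap (vval x) v + (\<Sum>e\<in>{e\<in>E. fst e = v}. T0 e) + (\<Sum>e\<in>{e\<in>E. snd e = v}. T1 e)"
    unfolding a b lap_alt by simp
  show ?thesis
  proof (cases x)
    case (Vert u)
    then have u: "u \<in> V" using x by simp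
    have "vval x = Kf u" using Vert by (auto simp: fun_eq_iff)
    moreover have "(\<Sum>e\<in>{e\<in>E. fst e = v}. T0 e) = 0" "(\<Sum>e\<in>{e\<in>E. snd e = v}. T1 e) = 0"
      unfolding T0_def T1_def using Vert by auto
    ultimately show ?thesis using lsum Kf_prop(1)[OF u] v Vert by auto
  next
    case (Inner e' s)
    then have e': "e' \<in> E" "0 < s" "s < L e'" using x by auto
    define lam where "lam = s / L e'"
    have tp: "tpos x = s" using Inner by simp
    have ton_x: "ton x = (\<lambda>e. e' = e)" using Inner by (simp add: fun_eq_iff)
    have vx: "vval x = (\<lambda>w. (1 - lam) * Kf (fst e') w + lam * Kf (snd e') w + 0)"
      using Inner lam_def by (auto simp: fun_eq_iff)
    have lp: "lap (vval x) v = (1 - lam) * ((if v = w0 then 1 else 0) - (if v = fst e' then 1 else 0))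
        + lam * ((if v = w0 then 1 else 0) - (if v = snd e' then 1 else 0))"
      unfolding vx lap_lin using Kf_prop(1)[OF fstE[OF e'(1)]] Kf_prop(1)[OF sndE[OF e'(1)]] v by auto
    have t0: "(\<Sum>e\<in>{e\<in>E. fst e = v}. T0 e) = (if fst e' = v then 1 - lam else 0)"
    proof -
      have "(\<Sum>e\<in>{e\<in>E. fst e = v}. T0 e) = (\<Sum>e\<in>{e\<in>E. fst e = v}. if e' = e then 1 - s / L e else 0)"
        unfolding T0_def tp ton_x ..
      also have "\<dots> = (if e' \<in> {e\<in>E. fst e = v} then 1 - s / L e' else 0)"
        by (rule sum.delta'[OF finFst])
      finally show ?thesis using e' lam_def by auto
    qed
    have t1: "(\<Sum>e\<in>{e\<in>E. snd e = v}. T1 e) = (if snd e' = v then lam else 0)"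
    proof -
      have "(\<Sum>e\<in>{e\<in>E. snd e = v}. T1 e) = (\<Sum>e\<in>{e\<in>E. snd e = v}. if e' = e then s / L e else 0)"
        unfolding T1_def tp ton_x ..
      also have "\<dots> = (if e' \<in> {e\<in>E. snd e = v} then s / L e' else 0)"
        by (rule sum.delta'[OF finSnd])
      finally show ?thesis using e' lam_def by auto
    qed
    show ?thesis unfolding lsum lp t0 t1 using Inner by (auto simp: algebra_simps)
  qed
qed

lemma Fv_out_vert: assumes y: "y \<in> points V E L" and z: "z \<in> points V E L" and v: "v \<in> V"
  shows "- out_slopes E L (Fv z y) (Vert v) = (if Vert v = y then 1 else 0) - (if Vert v = z then 1 else 0)"
proof -
  have "out_slopes E L (Fv z y) (Vert v) = (\<Sum>e\<in>{e\<in>E. fst e = v}. sl0 y e - sl0 z e) + (\<Sum>e\<in>{e\<in>E. snd e = v}. - (slL y e - slL z e))"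
    unfolding out_slopes_def using Fv_rderiv0[OF y z] Fv_lderivL[OF y z] by (auto intro!: sum.cong arg_cong2[where f="(+)"])
  also have "\<dots> = ((\<Sum>e\<in>{e\<in>E. fst e = v}. sl0 y e) + (\<Sum>e\<in>{e\<in>E. snd e = v}. - slL y e))
     - ((\<Sum>e\<in>{e\<in>E. fst e = v}. sl0 z e) + (\<Sum>e\<in>{e\<in>E. snd e = v}. - slL z e))"
    by (simp add: sum_subtractf sum_negf)
  finally show ?thesis unfolding vsum_lemma[OF y v] vsum_lemma[OF z v] by auto
qed

lemma Fv_voltage: assumes y: "y \<in> points V E L" and z: "z \<in> points V E L"
  shows "is_voltage V E L z y (Fv z y)"
  unfolding is_voltage_def
proof (intro conjI ballI allI impI)
  fix x assume "x \<notin> points V E L" then show "Fv z y x = 0" unfolding Fv_def by simp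
next
  fix e assume "e \<in> E" then show "PL_on (L e) (\<lambda>t. Fv z y (pt_of L e t))" using Fv_PL[OF y z] by simp
next
  fix x assume x: "x \<in> points V E L"
  show "- out_slopes E L (Fv z y) x = (if x = y then 1 else 0) - (if x = z then 1 else 0)"
  proof (cases x)
    case (Vert v)
    then show ?thesis using Fv_out_vert[OF y z, of v] x by auto
  next
    case (Inner e t)
    then have et: "e \<in> E" "0 < t" "t < L e" using x by auto
    show ?thesis unfolding Inner out_slopes_def using Fv_inner[OF y z et] by auto
  qed
next
  show "Fv z y z = 0" unfolding Fv_def using z by simp
qed

end


context mg begin

lemma voltage_unique:
  assumes z: "z \<in> points V E L" and F: "is_voltage V E L z y f" and G: "is_voltage V E L z y g"
  shows "f = g"
proof -
  have f0: "\<forall>x. x \<notin> points V E L \<longrightarrow> f x = 0" and fPL: "\<forall>e\<in>E. PL_on (L e) (\<lambda>t. f (pt_of L e t))"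
    and fL: "\<forall>x\<in>points V E L. - out_slopes E L f x = (if x = y then 1 else 0) - (if x = z then 1 else 0)"
    and fz: "f z = 0" using F unfolding is_voltage_def by auto
  have g0: "\<forall>x. x \<notin> points V E L \<longrightarrow> g x = 0" and gPL: "\<forall>e\<in>E. PL_on (L e) (\<lambda>t. g (pt_of L e t))"
    and gL: "\<forall>x\<in>points V E L. - out_slopes E L g x = (if x = y then 1 else 0) - (if x = z then 1 else 0)"
    and gz: "g z = 0" using G unfolding is_voltage_def by auto
  have osl: "out_slopes E L f x = out_slopes E L g x" if "x \<in> points V E L" for x
    using fL gL that by (metis neg_equal_iff_equal)
  define hv where "hv u = f (Vert u) - g (Vert u)" for u
  have edge: "rderiv (\<lambda>t. f (pt_of L e t)) 0 - rderiv (\<lambda>t. g (pt_of L e t)) 0 = (hv (snd e) - hv (fst e)) / L e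
     \<and> lderiv (\<lambda>t. f (pt_of L e t)) (L e) - lderiv (\<lambda>t. g (pt_of L e t)) (L e) = (hv (snd e) - hv (fst e)) / L e
     \<and> (\<forall>t\<in>{0..L e}. f (pt_of L e t) - g (pt_of L e t) = hv (fst e) + (hv (snd e) - hv (fst e)) * t / L e)"
    if e: "e \<in> E" for e
  proof -
    define \<phi>f where "\<phi>f = (\<lambda>t. f (pt_of L e t))"
    define \<phi>g where "\<phi>g = (\<lambda>t. g (pt_of L e t))"
    have Le: "L e > 0" using Lpos e by auto
    have pf: "PL_on (L e) \<phi>f" using fPL e \<phi>f_def by auto
    have pg: "PL_on (L e) \<phi>g" using gPL e \<phi>g_def by auto
    have ph: "PL_on (L e) (\<lambda>t. \<phi>f t - \<phi>g t)" by (rule PL_diff[OF pf pg])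
    have rd: "rderiv (\<lambda>t. \<phi>f t - \<phi>g t) t = rderiv \<phi>f t - rderiv \<phi>g t" if "0 \<le> t" "t < L e" for t
      by (rule rderiv_diff[OF PL_rderiv_ex[OF pf that] PL_rderiv_ex[OF pg that]])
    have ld: "lderiv (\<lambda>t. \<phi>f t - \<phi>g t) t = lderiv \<phi>f t - lderiv \<phi>g t" if "0 < t" "t \<le> L e" for t
      by (rule lderiv_diff[OF PL_lderiv_ex[OF pf that] PL_lderiv_ex[OF pg that]])
    have harm: "\<forall>t\<in>{0<..<L e}. rderiv (\<lambda>t. \<phi>f t - \<phi>g t) t = lderiv (\<lambda>t. \<phi>f t - \<phi>g t) t"
    proof
      fix t assume t: "t \<in> {0<..<L e}"
      have "Inner e t \<in> points V E L" using t e by simp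
      then have "out_slopes E L f (Inner e t) = out_slopes E L g (Inner e t)" by (rule osl)
      then have "rderiv \<phi>f t - lderiv \<phi>f t = rderiv \<phi>g t - lderiv \<phi>g t"
        unfolding out_slopes_def \<phi>f_def \<phi>g_def by simp
      then show "rderiv (\<lambda>t. \<phi>f t - \<phi>g t) t = lderiv (\<lambda>t. \<phi>f t - \<phi>g t) t"
        using rd[of t] ld[of t] t by auto
    qed
    obtain m c where mc: "\<forall>t\<in>{0..L e}. \<phi>f t - \<phi>g t = m * t + c"
      using PL_harm_linear[OF ph Le harm] by blast
    have r0: "rderiv (\<lambda>t. \<phi>f t - \<phi>g t) 0 = m"
      by (rule rderiv_lin(2)[of "L e" _ _ _ c]) (use Le mc in auto)
    have lL: "lderiv (\<lambda>t. \<phi>f t - \<phi>g t) (L e) = m"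
      by (rule lderiv_lin(2)[of "L e" _ _ _ c]) (use Le mc in auto)
    have c0: "hv (fst e) = c" using mc[rule_format, of 0] Le unfolding \<phi>f_def \<phi>g_def hv_def pt_of_def by auto
    have cL: "hv (snd e) = m * L e + c" using mc[rule_format, of "L e"] Le unfolding \<phi>f_def \<phi>g_def hv_def pt_of_def by auto
    have m: "m = (hv (snd e) - hv (fst e)) / L e" using c0 cL Le by (simp add: field_simps)
    show ?thesis
    proof (intro conjI)
      show "rderiv (\<lambda>t. f (pt_of L e t)) 0 - rderiv (\<lambda>t. g (pt_of L e t)) 0 = (hv (snd e) - hv (fst e)) / L e"
        using rd[of 0] r0 m Le unfolding \<phi>f_def \<phi>g_def by simp
      show "lderiv (\<lambda>t. f (pt_of L e t)) (L e) - lderiv (\<lambda>t. g (pt_of L e t)) (L e) = (hv (snd e) - hv (fst e)) / L e"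
        using ld[of "L e"] lL m Le unfolding \<phi>f_def \<phi>g_def by simp
      show "\<forall>t\<in>{0..L e}. f (pt_of L e t) - g (pt_of L e t) = hv (fst e) + (hv (snd e) - hv (fst e)) * t / L e"
        using mc m c0 unfolding \<phi>f_def \<phi>g_def by auto
    qed
  qed
  have laph: "lap hv v = 0" if v: "v \<in> V" for v
  proof -
    have "out_slopes E L f (Vert v) - out_slopes E L g (Vert v) = 0" using osl v by simp
    moreover have "out_slopes E L f (Vert v) - out_slopes E L g (Vert v)
       = (\<Sum>e\<in>{e\<in>E. fst e = v}. rderiv (\<lambda>t. f (pt_of L e t)) 0 - rderiv (\<lambda>t. g (pt_of L e t)) 0)
       + (\<Sum>e\<in>{e\<in>E. snd e = v}. - (lderiv (\<lambda>t. f (pt_of L e t)) (L e) - lderiv (\<lambda>t. g (pt_of L e t)) (L e)))"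
      unfolding out_slopes_def by (simp add: sum_subtractf sum_negf)
    moreover have "\<dots> = lap hv v"
      unfolding lap_def using edge by (auto intro!: arg_cong2[where f="(+)"] sum.cong simp: minus_divide_left)
    ultimately show ?thesis by simp
  qed
  have hvc: "hv u = hv w0" if "u \<in> V" for u using max_principle[OF _ that w0V] laph by auto
  have hz: "f z - g z = 0" using fz gz by simp
  have C0: "hv w0 = 0"
  proof -
    from z consider (V) v where "v \<in> V" "z = Vert v" | (I) e s where "e \<in> E" "0 < s" "s < L e" "z = Inner e s"
      unfolding points_iff by blast
    then show ?thesis
    proof cases
      case V then show ?thesis using hz hvc unfolding hv_def by metis
    next
      case I
      have "f (pt_of L e s) - g (pt_of L e s) = hv (fst e) + (hv (snd e) - hv (fst e)) * s / L e"
        using edge[OF I(1)] I by auto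
      moreover have "pt_of L e s = z" using I unfolding pt_of_def by auto
      ultimately show ?thesis using hz hvc[OF fstE[OF I(1)]] hvc[OF sndE[OF I(1)]] by simp
    qed
  qed
  show ?thesis
  proof
    fix x
    show "f x = g x"
    proof (cases "x \<in> points V E L")
      case False then show ?thesis using f0 g0 by auto
    next
      case True
      then consider (V) v where "v \<in> V" "x = Vert v" | (I) e s where "e \<in> E" "0 < s" "s < L e" "x = Inner e s"
        unfolding points_iff by blast
      then show ?thesis
      proof cases
        case V then show ?thesis using hvc C0 unfolding hv_def by force
      next
        case I
        have "f (pt_of L e s) - g (pt_of L e s) = hv (fst e) + (hv (snd e) - hv (fst e)) * s / L e"
          using edge[OF I(1)] I by auto
        moreover have "pt_of L e s = x" using I unfolding pt_of_def by auto
        ultimately show ?thesis using C0 hvc[OF fstE[OF I(1)]] hvc[OF sndE[OF I(1)]] by simp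
      qed
    qed
  qed
qed

lemma jv_eq: assumes "z \<in> points V E L" "y \<in> points V E L"
  shows "jv V E L z x y = Fv z y x"
proof -
  have "(THE f. is_voltage V E L z y f) = Fv z y"
  proof (rule the_equality)
    show "is_voltage V E L z y (Fv z y)" by (rule Fv_voltage[OF assms(2,1)])
    fix f assume "is_voltage V E L z y f"
    then show "f = Fv z y" by (rule voltage_unique[OF assms(1) _ Fv_voltage[OF assms(2,1)]])
  qed
  then show ?thesis unfolding jv_def by simp
qed

end


definition tent :: "real \<Rightarrow> real \<Rightarrow> real \<Rightarrow> real" where
  "tent l s t = (s + t - \<bar>t - s\<bar>) / 2 - s * t / l"

context mg begin

lemma Yp_sym: assumes a: "a \<in> points V E L" and b: "b \<in> points V E L" shows "Yp a b = Yp b a"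
proof -
  have VI: "Yp (Vert u) (Inner e t) = Yp (Inner e t) (Vert u)" if "u \<in> V" "e \<in> E" "0 < t" "t < L e" for u e t
  proof -
    have "L e > 0" using Lpos that by auto
    then show ?thesis using that Kf_sym[OF that(1) fstE[OF that(2)]] Kf_sym[OF that(1) sndE[OF that(2)]]
      by (simp add: edgeY_def tentx_def field_simps)
  qed
  have II: "Yp (Inner e s) (Inner e' t) = Yp (Inner e' t) (Inner e s)"
    if "e \<in> E" "0 < s" "s < L e" "e' \<in> E" "0 < t" "t < L e'" for e s e' t
  proof -
    have "L e > 0" "L e' > 0" using Lpos that by auto
    then show ?thesis using that
        Kf_sym[OF fstE[OF that(1)] fstE[OF that(4)]] Kf_sym[OF fstE[OF that(1)] sndE[OF that(4)]]
        Kf_sym[OF sndE[OF that(1)] fstE[OF that(4)]] Kf_sym[OF sndE[OF that(1)] sndE[OF that(4)]]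
      by (simp add: edgeY_def tentx_def field_simps abs_minus_commute)
  qed
  from a consider (V) u where "u \<in> V" "a = Vert u" | (I) e s where "e \<in> E" "0 < s" "s < L e" "a = Inner e s"
    unfolding points_iff by blast
  then show ?thesis
  proof cases
    case V
    from b consider (V2) v where "v \<in> V" "b = Vert v" | (I2) e t where "e \<in> E" "0 < t" "t < L e" "b = Inner e t"
      unfolding points_iff by blast
    then show ?thesis
    proof cases
      case V2 then show ?thesis using V Kf_sym by simp
    next
      case I2 then show ?thesis using V VI by simp
    qed
  next
    case I
    from b consider (V2) v where "v \<in> V" "b = Vert v" | (I2) e' t where "e' \<in> E" "0 < t" "t < L e'" "b = Inner e' t"
      unfolding points_iff by blast
    then show ?thesis
    proof cases
      case V2 then show ?thesis using I VI[of v e s] by simp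
    next
      case I2 then show ?thesis using I II by simp
    qed
  qed
qed

lemma res_formula: assumes "x \<in> points V E L" "y \<in> points V E L"
  shows "res V E L x y = Yp x x + Yp y y - 2 * Yp x y"
  unfolding res_def jv_eq[OF assms(2) assms(1)] Fv_def using assms Yp_sym[OF assms] by simp

lemma jv_formula: assumes "z \<in> points V E L" "x \<in> points V E L" "y \<in> points V E L"
  shows "jv V E L z x y = (res V E L z x + res V E L z y - res V E L x y) / 2"
  unfolding jv_eq[OF assms(1) assms(3)] Fv_def res_formula[OF assms(1,2)] res_formula[OF assms(1,3)] res_formula[OF assms(2,3)]
  using assms Yp_sym[OF assms(1) assms(2)] Yp_sym[OF assms(1) assms(3)] Yp_sym[OF assms(2) assms(3)] by (simp add: field_simps)

lemma res_sym: assumes "x \<in> points V E L" "y \<in> points V E L"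
  shows "res V E L x y = res V E L y x"
  using res_formula[OF assms] res_formula[OF assms(2,1)] Yp_sym[OF assms] by simp

lemma vval_pt: assumes "e \<in> E" "0 \<le> s" "s \<le> L e"
  shows "vval (pt_of L e s) u = (1 - s / L e) * Kf (fst e) u + (s / L e) * Kf (snd e) u"
  using assms Lpos[OF assms(1)] unfolding pt_of_def by auto

lemma tentx_pt: assumes "e \<in> E" "0 \<le> s" "s \<le> L e" "0 \<le> t" "t \<le> L e'"
  shows "tentx (pt_of L e s) e' t = (if e = e' then tent (L e) s t else 0)"
  using assms Lpos[OF assms(1)] unfolding pt_of_def tentx_def tent_def by (auto simp: field_simps)

lemma Yp_pt_pt: assumes "e \<in> E" "0 \<le> s" "s \<le> L e" "e' \<in> E" "0 \<le> t" "t \<le> L e'"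
  shows "Yp (pt_of L e s) (pt_of L e' t) =
    (1 - t / L e') * ((1 - s / L e) * Kf (fst e) (fst e') + (s / L e) * Kf (snd e) (fst e'))
    + (t / L e') * ((1 - s / L e) * Kf (fst e) (snd e') + (s / L e) * Kf (snd e) (snd e'))
    + (if e = e' then tent (L e) s t else 0)" (is "_ = ?R")
proof -
  have "Yp (pt_of L e s) (pt_of L e' t) = edgeY (pt_of L e s) e' t"
    by (rule Yp_pt[OF pt_in_points[OF assms(1-3)] assms(4-6)])
  also have "\<dots> = ?R"
    unfolding edgeY_def vval_pt[OF assms(1-3)] tentx_pt[OF assms(1-3) assms(5,6)]
    using Lpos[OF assms(4)] Lpos[OF assms(1)] by (simp add: field_simps)
  finally show ?thesis .
qed

end


lemma prod_integrable:
  fixes f g :: "real \<Rightarrow> real"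
  assumes "f absolutely_integrable_on {a..b}" "continuous_on {a..b} g"
  shows "(\<lambda>t. f t * g t) integrable_on {a..b}"
proof -
  have m: "g \<in> borel_measurable (lebesgue_on {a..b})"
    by (rule continuous_imp_measurable_on_sets_lebesgue[OF assms(2)]) simp
  have bd: "bounded (g ` {a..b})"
    using compact_continuous_image[OF assms(2)] compact_imp_bounded by auto
  have "(\<lambda>t. g t * f t) absolutely_integrable_on {a..b}"
    by (rule absolutely_integrable_bounded_measurable_product_real[OF m _ bd assms(1)]) simp
  then show ?thesis by (simp add: absolutely_integrable_on_def mult.commute)
qed

context mg begin

definition cont_edges :: "('v mpt \<Rightarrow> real) \<Rightarrow> bool" where
  "cont_edges F \<longleftrightarrow> (\<forall>e\<in>E. continuous_on {0..L e} (\<lambda>t. F (pt_of L e t)))"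

lemma integ_cong:
  assumes "\<forall>z\<in>points V E L. F z = G z"
  shows "integ V E L \<mu> F = integ V E L \<mu> G"
proof -
  have 1: "(\<Sum>v\<in>V. fst \<mu> v * F (Vert v)) = (\<Sum>v\<in>V. fst \<mu> v * G (Vert v))"
    using assms by (intro sum.cong) auto
  have 2: "(\<Sum>e\<in>E. integral {0..L e} (\<lambda>t. snd \<mu> e t * F (pt_of L e t))) = (\<Sum>e\<in>E. integral {0..L e} (\<lambda>t. snd \<mu> e t * G (pt_of L e t)))"
    using assms pt_in_points by (intro sum.cong integral_cong) auto
  show ?thesis unfolding integ_def 1 2 ..
qed

lemma integ_lin3:
  assumes gm: "is_gmeas V E L \<mu>" and cF: "cont_edges F" and cG: "cont_edges G" and cH: "cont_edges H"
  shows "integ V E L \<mu> (\<lambda>z. a * F z + b * G z + c * H z) = a * integ V E L \<mu> F + b * integ V E L \<mu> G + c * integ V E L \<mu> H"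
proof -
  have ii: "(\<lambda>t. snd \<mu> e t * K (pt_of L e t)) integrable_on {0..L e}" if "e \<in> E" "cont_edges K" for e K
    using prod_integrable[where f="snd \<mu> e" and a=0 and b="L e" and g="\<lambda>t. K (pt_of L e t)"] gm that
    unfolding is_gmeas_def cont_edges_def by auto
  have e: "integral {0..L e} (\<lambda>t. snd \<mu> e t * (a * F (pt_of L e t) + b * G (pt_of L e t) + c * H (pt_of L e t)))
     = a * integral {0..L e} (\<lambda>t. snd \<mu> e t * F (pt_of L e t)) + b * integral {0..L e} (\<lambda>t. snd \<mu> e t * G (pt_of L e t))
       + c * integral {0..L e} (\<lambda>t. snd \<mu> e t * H (pt_of L e t))" if "e \<in> E" for e
  proof -
    have "integral {0..L e} (\<lambda>t. snd \<mu> e t * (a * F (pt_of L e t) + b * G (pt_of L e t) + c * H (pt_of L e t)))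
      = integral {0..L e} (\<lambda>t. a * (snd \<mu> e t * F (pt_of L e t)) + b * (snd \<mu> e t * G (pt_of L e t)) + c * (snd \<mu> e t * H (pt_of L e t)))"
      by (simp add: algebra_simps)
    also have "\<dots> = integral {0..L e} (\<lambda>t. a * (snd \<mu> e t * F (pt_of L e t)) + b * (snd \<mu> e t * G (pt_of L e t)))
        + integral {0..L e} (\<lambda>t. c * (snd \<mu> e t * H (pt_of L e t)))"
      by (rule integral_add) (use ii[OF that cF] ii[OF that cG] ii[OF that cH] in \<open>auto intro!: integrable_add integrable_cmul[where 'b=real, simplified]\<close>)
    also have "\<dots> = integral {0..L e} (\<lambda>t. a * (snd \<mu> e t * F (pt_of L e t))) + integral {0..L e} (\<lambda>t. b * (snd \<mu> e t * G (pt_of L e t)))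
        + integral {0..L e} (\<lambda>t. c * (snd \<mu> e t * H (pt_of L e t)))"
      by (subst integral_add) (use ii[OF that cF] ii[OF that cG] in \<open>auto intro!: integrable_cmul[where 'b=real, simplified]\<close>)
    finally show ?thesis by simp
  qed
  show ?thesis unfolding integ_def using e
    by (simp add: sum.distrib sum_distrib_left algebra_simps)
qed

lemma cont_const: "cont_edges (\<lambda>_. c)" unfolding cont_edges_def by simp

lemma cont_Yp: assumes "x \<in> points V E L" shows "cont_edges (Yp x)"
  unfolding cont_edges_def
proof
  fix e assume e: "e \<in> E"
  have "L e \<noteq> 0" using Lpos[OF e] by simp
  then have "continuous_on {0..L e} (\<lambda>t. edgeY x e t)"
    unfolding edgeY_def tentx_def by (cases "ton x e") (auto intro!: continuous_intros)
  then show "continuous_on {0..L e} (\<lambda>t. Yp x (pt_of L e t))"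
    by (rule continuous_on_eq) (use Yp_pt[OF assms e] in auto)
qed

lemma cont_Ydiag: "cont_edges (\<lambda>z. Yp z z)"
  unfolding cont_edges_def
proof
  fix e assume e: "e \<in> E"
  have "continuous_on {0..L e} (\<lambda>t.
    (1 - t / L e) * ((1 - t / L e) * Kf (fst e) (fst e) + (t / L e) * Kf (snd e) (fst e))
    + (t / L e) * ((1 - t / L e) * Kf (fst e) (snd e) + (t / L e) * Kf (snd e) (snd e))
    + (if e = e then tent (L e) t t else 0))"
    unfolding tent_def using Lpos[OF e] by (auto intro!: continuous_intros)
  then show "continuous_on {0..L e} (\<lambda>t. Yp (pt_of L e t) (pt_of L e t))"
    by (rule continuous_on_eq) (use Yp_pt_pt[OF e _ _ e] in auto)
qed

lemma cont_res: assumes "x \<in> points V E L" shows "cont_edges (\<lambda>z. res V E L z x)"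
proof -
  have "cont_edges (\<lambda>z. 1 * Yp z z + (-2) * Yp x z + Yp x x * 1)"
    using cont_Ydiag cont_Yp[OF assms] unfolding cont_edges_def by (auto intro!: continuous_intros)
  moreover have "res V E L (pt_of L e t) x = 1 * Yp (pt_of L e t) (pt_of L e t) + (-2) * Yp x (pt_of L e t) + Yp x x * 1"
    if "e \<in> E" "t \<in> {0..L e}" for e t
    using res_formula[OF pt_in_points[of e t] assms] Yp_sym[OF assms pt_in_points[of e t]] that by auto
  ultimately show ?thesis unfolding cont_edges_def
    by (metis (no_types, lifting) continuous_on_cong)
qed

end


lemma lin_int:
  fixes a b A B :: real assumes ab: "a \<le> b"
  shows "((\<lambda>t. A + B * t) has_integral (A * (b - a) + B * (b\<^sup>2 - a\<^sup>2) / 2)) {a..b}"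
proof -
  have "((\<lambda>t. A + B * t) has_integral ((A * b + B * b\<^sup>2 / 2) - (A * a + B * a\<^sup>2 / 2))) {a..b}"
    by (rule fundamental_theorem_of_calculus[OF ab])
       (auto intro!: derivative_eq_intros simp: power2_eq_square field_simps)
  moreover have "(A * b + B * b\<^sup>2 / 2) - (A * a + B * a\<^sup>2 / 2) = A * (b - a) + B * (b\<^sup>2 - a\<^sup>2) / 2"
    by (simp add: algebra_simps diff_divide_distrib)
  ultimately show ?thesis by (simp only:)
qed

lemma eform_int:
  assumes "g = 0 \<or> (0 \<le> s \<and> s \<le> l)" "0 \<le> l"
  shows "((\<lambda>t. eform \<alpha> \<beta> g s 0 0 t) has_integral (\<alpha> * l + \<beta> * l\<^sup>2 / 2 + g * (s\<^sup>2 + (l - s)\<^sup>2) / 2)) {0..l}"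
proof (cases "g = 0")
  case True
  have "((\<lambda>t. \<alpha> + \<beta> * t) has_integral (\<alpha> * (l - 0) + \<beta> * (l\<^sup>2 - 0\<^sup>2) / 2)) {0..l}"
    by (rule lin_int) (use assms in auto)
  then show ?thesis using True by (simp add: eform_def)
next
  case False
  then have s: "0 \<le> s" "s \<le> l" using assms by auto
  have h1: "((\<lambda>t. (\<alpha> + g * s) + (\<beta> - g) * t) has_integral ((\<alpha> + g * s) * (s - 0) + (\<beta> - g) * (s\<^sup>2 - 0\<^sup>2) / 2)) {0..s}"
    by (rule lin_int) (use s in auto)
  have h1b: "((\<lambda>t. eform \<alpha> \<beta> g s 0 0 t) has_integral ((\<alpha> + g * s) * (s - 0) + (\<beta> - g) * (s\<^sup>2 - 0\<^sup>2) / 2)) {0..s}"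
  proof (rule has_integral_eq[OF _ h1])
    fix t assume "t \<in> {0..s}"
    then have "\<bar>t - s\<bar> = s - t" by auto
    then show "(\<alpha> + g * s) + (\<beta> - g) * t = eform \<alpha> \<beta> g s 0 0 t" unfolding eform_def by (simp add: algebra_simps)
  qed
  have h2: "((\<lambda>t. (\<alpha> - g * s) + (\<beta> + g) * t) has_integral ((\<alpha> - g * s) * (l - s) + (\<beta> + g) * (l\<^sup>2 - s\<^sup>2) / 2)) {s..l}"
    by (rule lin_int) (use s in auto)
  have h2b: "((\<lambda>t. eform \<alpha> \<beta> g s 0 0 t) has_integral ((\<alpha> - g * s) * (l - s) + (\<beta> + g) * (l\<^sup>2 - s\<^sup>2) / 2)) {s..l}"
  proof (rule has_integral_eq[OF _ h2])
    fix t assume "t \<in> {s..l}"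
    then have "\<bar>t - s\<bar> = t - s" by auto
    then show "(\<alpha> - g * s) + (\<beta> + g) * t = eform \<alpha> \<beta> g s 0 0 t" unfolding eform_def by (simp add: algebra_simps)
  qed
  have "((\<lambda>t. eform \<alpha> \<beta> g s 0 0 t) has_integral
      ((\<alpha> + g * s) * (s - 0) + (\<beta> - g) * (s\<^sup>2 - 0\<^sup>2) / 2 + ((\<alpha> - g * s) * (l - s) + (\<beta> + g) * (l\<^sup>2 - s\<^sup>2) / 2))) {0..l}"
    by (rule has_integral_combine[OF s h1b h2b])
  moreover have "(\<alpha> + g * s) * (s - 0) + (\<beta> - g) * (s\<^sup>2 - 0\<^sup>2) / 2 + ((\<alpha> - g * s) * (l - s) + (\<beta> + g) * (l\<^sup>2 - s\<^sup>2) / 2)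
     = \<alpha> * l + \<beta> * l\<^sup>2 / 2 + g * (s\<^sup>2 + (l - s)\<^sup>2) / 2"
    by (simp add: power2_eq_square field_simps)
  ultimately show ?thesis by (simp only:)
qed

lemma ibp_alg:
  fixes a b c \<alpha> \<beta> g s l :: real shows "- b * (\<alpha> + g * s) + (b + 2 * c * l) * (\<alpha> + \<beta> * l + g * (l - s))
     - 2 * c * (\<alpha> * l + \<beta> * l\<^sup>2 / 2 + g * (s\<^sup>2 + (l - s)\<^sup>2) / 2)
   = - a * (\<beta> - g) + (a + b * l + c * l\<^sup>2) * (\<beta> + g) - 2 * g * (a + b * s + c * s\<^sup>2)"
  by (simp add: power2_eq_square field_simps)

context mg begin

definition Kpp where "Kpp e = Kf (fst e) (fst e)"
definition Kpq where "Kpq e = Kf (fst e) (snd e)"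
definition Kqq where "Kqq e = Kf (snd e) (snd e)"
definition ca where "ca e = Kpp e / 2"
definition cb where "cb e = ((2 * Kpq e - 2 * Kpp e) / L e + 1) / 2"
definition cc where "cc e = ((Kpp e - 2 * Kpq e + Kqq e) / (L e)\<^sup>2 - 1 / L e) / 2"
definition Gq where "Gq e t = ca e + cb e * t + cc e * t\<^sup>2"

lemma Ydiag_Gq: assumes "e \<in> E" "0 \<le> t" "t \<le> L e"
  shows "Yp (pt_of L e t) (pt_of L e t) = 2 * Gq e t"
proof -
  have Le: "L e > 0" using Lpos assms by auto
  have s: "Kf (snd e) (fst e) = Kf (fst e) (snd e)" using Kf_sym fstE sndE assms by metis
  have tt: "tent (L e) t t = t - t\<^sup>2 / L e" unfolding tent_def using Le by (simp add: power2_eq_square field_simps)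
  show ?thesis unfolding Yp_pt_pt[OF assms assms] Gq_def ca_def cb_def cc_def Kpp_def Kpq_def Kqq_def s if_True tt
    using Le by (simp add: power2_eq_square field_simps)
qed

lemma Gq_L: "e \<in> E \<Longrightarrow> Gq e (L e) = Kqq e / 2"
  using Lpos[of e] unfolding Gq_def ca_def cb_def cc_def by (simp add: power2_eq_square field_simps)

definition mv :: "'v \<Rightarrow> real" where
  "mv v = (if v \<in> V then (if v = w0 then 1 else 0) - ((\<Sum>e\<in>{e\<in>E. fst e = v}. cb e) - (\<Sum>e\<in>{e\<in>E. snd e = v}. cb e + 2 * cc e * L e)) else 0)"

definition mu0 :: "'v gmeas" where "mu0 = (mv, \<lambda>e t. - 2 * cc e)"

lemma mu0_gmeas: "is_gmeas V E L mu0"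
  unfolding is_gmeas_def mu0_def mv_def by (auto intro!: absolutely_integrable_continuous_real continuous_intros)

lemma integ_mu0: "integ V E L mu0 F = (\<Sum>v\<in>V. mv v * F (Vert v)) + (\<Sum>e\<in>E. (- 2 * cc e) * integral {0..L e} (\<lambda>t. F (pt_of L e t)))"
  unfolding integ_def mu0_def by simp

lemma mvsum: "(\<Sum>v\<in>V. mv v * h v) = h w0 - ((\<Sum>e\<in>E. cb e * h (fst e)) - (\<Sum>e\<in>E. (cb e + 2 * cc e * L e) * h (snd e)))"
proof -
  have "(\<Sum>v\<in>V. mv v * h v) = (\<Sum>v\<in>V. (if v = w0 then h v else 0)) - ((\<Sum>v\<in>V. \<Sum>e\<in>{e\<in>E. fst e = v}. cb e * h (fst e)) - (\<Sum>v\<in>V. \<Sum>e\<in>{e\<in>E. snd e = v}. (cb e + 2 * cc e * L e) * h (snd e)))"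
    unfolding sum_subtractf[symmetric]
  proof (rule sum.cong)
    fix v assume v: "v \<in> V"
    have a: "(\<Sum>e\<in>{e\<in>E. fst e = v}. cb e * h (fst e)) = (\<Sum>e\<in>{e\<in>E. fst e = v}. cb e) * h v"
      unfolding sum_distrib_right by (rule sum.cong) auto
    have b: "(\<Sum>e\<in>{e\<in>E. snd e = v}. (cb e + 2 * cc e * L e) * h (snd e)) = (\<Sum>e\<in>{e\<in>E. snd e = v}. cb e + 2 * cc e * L e) * h v"
      unfolding sum_distrib_right by (rule sum.cong) auto
    show "mv v * h v = (if v = w0 then h v else 0) - ((\<Sum>e\<in>{e\<in>E. fst e = v}. cb e * h (fst e)) - (\<Sum>e\<in>{e\<in>E. snd e = v}. (cb e + 2 * cc e * L e) * h (snd e)))"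
      unfolding a b using v by (simp add: mv_def algebra_simps)
  qed simp
  also have "\<dots> = h w0 - ((\<Sum>e\<in>E. cb e * h (fst e)) - (\<Sum>e\<in>E. (cb e + 2 * cc e * L e) * h (snd e)))"
    unfolding group_fst group_snd using w0V finV by simp
  finally show ?thesis .
qed

lemma mu0_mass: "integ V E L mu0 (\<lambda>_. 1) = 1"
proof -
  have "(\<Sum>v\<in>V. mv v * 1) = 1 - ((\<Sum>e\<in>E. cb e * 1) - (\<Sum>e\<in>E. (cb e + 2 * cc e * L e) * 1))"
    by (rule mvsum)
  moreover have "integral {0..L e} (\<lambda>t. 1::real) = L e" if "e \<in> E" for e
    using Lpos[OF that] by simp
  ultimately have "integ V E L mu0 (\<lambda>_. 1) = 1 - ((\<Sum>e\<in>E. cb e) - (\<Sum>e\<in>E. cb e + 2 * cc e * L e)) + (\<Sum>e\<in>E. - 2 * cc e * L e)"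
    unfolding integ_mu0 by simp
  also have "\<dots> = 1" by (simp add: sum.distrib sum_negf)
  finally show ?thesis .
qed

lemma edgeY_int: assumes x: "x \<in> points V E L" and e: "e \<in> E"
  shows "integral {0..L e} (\<lambda>t. Yp x (pt_of L e t)) =
    (vval x (fst e) + (if ton x e then tpos x / 2 else 0)) * L e
    + ((vval x (snd e) - vval x (fst e)) / L e + (if ton x e then 1/2 - tpos x / L e else 0)) * (L e)\<^sup>2 / 2
    + (if ton x e then - 1/2 else 0) * ((tpos x)\<^sup>2 + (L e - tpos x)\<^sup>2) / 2" (is "_ = ?R")
proof -
  have "integral {0..L e} (\<lambda>t. Yp x (pt_of L e t)) = integral {0..L e} (\<lambda>t. edgeY x e t)"
    by (rule integral_cong) (use Yp_pt[OF x e] in auto)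
  also have "\<dots> = ?R"
    unfolding edgeY_eform
    by (rule integral_unique[OF eform_int]) (use ton_pos[OF x, of e] Lpos[OF e] in auto)
  finally show ?thesis .
qed

lemma vval_w0: "x \<in> points V E L \<Longrightarrow> vval x w0 = 0"
  by (cases x) (auto simp: Kf_prop(2) fstE sndE)

lemma edge_green: assumes x: "x \<in> points V E L" and e: "e \<in> E"
  shows "- cb e * vval x (fst e) + (cb e + 2 * cc e * L e) * vval x (snd e) - 2 * cc e * integral {0..L e} (\<lambda>t. Yp x (pt_of L e t))
    = - ca e * sl0 x e + (Kqq e / 2) * slL x e + (if ton x e then Gq e (tpos x) else 0)"
proof -
  have Le: "L e > 0" using Lpos e by auto
  define \<alpha> where "\<alpha> = vval x (fst e) + (if ton x e then tpos x / 2 else 0)"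
  define \<beta> where "\<beta> = (vval x (snd e) - vval x (fst e)) / L e + (if ton x e then 1/2 - tpos x / L e else 0)"
  define g where "g = (if ton x e then - 1/2 else (0::real))"
  define s where "s = tpos x"
  have I: "integral {0..L e} (\<lambda>t. Yp x (pt_of L e t)) = \<alpha> * L e + \<beta> * (L e)\<^sup>2 / 2 + g * (s\<^sup>2 + (L e - s)\<^sup>2) / 2"
    unfolding edgeY_int[OF x e] \<alpha>_def \<beta>_def g_def s_def ..
  have 1: "\<alpha> + g * s = vval x (fst e)" unfolding \<alpha>_def g_def s_def by auto
  have 2: "\<alpha> + \<beta> * L e + g * (L e - s) = vval x (snd e)" unfolding \<alpha>_def \<beta>_def g_def s_def using Le
    by (cases "ton x e") (auto simp: field_simps)
  have 3: "\<beta> - g = sl0 x e" unfolding \<beta>_def g_def sl0_def by auto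
  have 4: "\<beta> + g = slL x e" unfolding \<beta>_def g_def slL_def by auto
  have 5: "ca e + cb e * L e + cc e * (L e)\<^sup>2 = Kqq e / 2" using Gq_L[OF e] unfolding Gq_def .
  have 6: "2 * g * (ca e + cb e * s + cc e * s\<^sup>2) = - (if ton x e then Gq e (tpos x) else 0)"
    unfolding g_def s_def Gq_def by auto
  have "- cb e * vval x (fst e) + (cb e + 2 * cc e * L e) * vval x (snd e) - 2 * cc e * integral {0..L e} (\<lambda>t. Yp x (pt_of L e t))
    = - cb e * (\<alpha> + g * s) + (cb e + 2 * cc e * L e) * (\<alpha> + \<beta> * L e + g * (L e - s))
     - 2 * cc e * (\<alpha> * L e + \<beta> * (L e)\<^sup>2 / 2 + g * (s\<^sup>2 + (L e - s)\<^sup>2) / 2)"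
    by (simp only: I 1 2)
  also have "\<dots> = - ca e * (\<beta> - g) + (ca e + cb e * L e + cc e * (L e)\<^sup>2) * (\<beta> + g) - 2 * g * (ca e + cb e * s + cc e * s\<^sup>2)"
    by (rule ibp_alg)
  also have "\<dots> = - ca e * sl0 x e + (Kqq e / 2) * slL x e + (if ton x e then Gq e (tpos x) else 0)"
    by (simp only: 3 4 5 6)
  finally show ?thesis .
qed

lemma group_mul_fst: fixes h :: "'v \<Rightarrow> real" shows "(\<Sum>e\<in>E. h (fst e) * k e) = (\<Sum>v\<in>V. h v * (\<Sum>e\<in>{e\<in>E. fst e = v}. k e))"
  unfolding group_fst[symmetric]
proof (intro sum.cong refl)
  fix v assume "v \<in> V"
  show "(\<Sum>e\<in>{e\<in>E. fst e = v}. h (fst e) * k e) = h v * (\<Sum>e\<in>{e\<in>E. fst e = v}. k e)"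
    by (auto simp: sum_distrib_left intro!: sum.cong)
qed

lemma group_mul_snd: fixes h :: "'v \<Rightarrow> real" shows "(\<Sum>e\<in>E. h (snd e) * k e) = (\<Sum>v\<in>V. h v * (\<Sum>e\<in>{e\<in>E. snd e = v}. k e))"
  unfolding group_snd[symmetric]
proof (intro sum.cong refl)
  fix v assume "v \<in> V"
  show "(\<Sum>e\<in>{e\<in>E. snd e = v}. h (snd e) * k e) = h v * (\<Sum>e\<in>{e\<in>E. snd e = v}. k e)"
    by (auto simp: sum_distrib_left intro!: sum.cong)
qed

lemma green_mu0: assumes x: "x \<in> points V E L"
  shows "integ V E L mu0 (Yp x) = Yp x x / 2"
proof -
  have vert: "(\<Sum>v\<in>V. mv v * Yp x (Vert v)) = (\<Sum>v\<in>V. mv v * vval x v)" by (rule sum.cong) auto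
  have "integ V E L mu0 (Yp x) = (\<Sum>v\<in>V. mv v * vval x v) + (\<Sum>e\<in>E. (- 2 * cc e) * integral {0..L e} (\<lambda>t. Yp x (pt_of L e t)))"
    unfolding integ_mu0 vert ..
  also have "\<dots> = (\<Sum>e\<in>E. - cb e * vval x (fst e) + (cb e + 2 * cc e * L e) * vval x (snd e) - 2 * cc e * integral {0..L e} (\<lambda>t. Yp x (pt_of L e t)))"
    unfolding mvsum vval_w0[OF x] by (simp add: sum.distrib sum_subtractf sum_negf algebra_simps)
  also have "\<dots> = (\<Sum>e\<in>E. - ca e * sl0 x e + (Kqq e / 2) * slL x e + (if ton x e then Gq e (tpos x) else 0))"
    by (rule sum.cong[OF refl], rule edge_green[OF x], assumption)
  also have "\<dots> = - (\<Sum>v\<in>V. (Kf v v / 2) * ((\<Sum>e\<in>{e\<in>E. fst e = v}. sl0 x e) + (\<Sum>e\<in>{e\<in>E. snd e = v}. - slL x e)))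
      + (\<Sum>e\<in>E. if ton x e then Gq e (tpos x) else 0)"
  proof -
    have a: "(\<Sum>e\<in>E. ca e * sl0 x e) = (\<Sum>v\<in>V. (Kf v v / 2) * (\<Sum>e\<in>{e\<in>E. fst e = v}. sl0 x e))"
      unfolding ca_def Kpp_def by (rule group_mul_fst[where h="\<lambda>v. Kf v v / 2"])
    have b: "(\<Sum>e\<in>E. (Kqq e / 2) * slL x e) = (\<Sum>v\<in>V. (Kf v v / 2) * (\<Sum>e\<in>{e\<in>E. snd e = v}. slL x e))"
      unfolding Kqq_def by (rule group_mul_snd[where h="\<lambda>v. Kf v v / 2"])
    show ?thesis using a b
      by (simp add: sum.distrib sum_negf distrib_left sum_subtractf algebra_simps)
  qed
  also have "\<dots> = Yp x x / 2"
  proof -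
    have c: "(\<Sum>v\<in>V. (Kf v v / 2) * ((\<Sum>e\<in>{e\<in>E. fst e = v}. sl0 x e) + (\<Sum>e\<in>{e\<in>E. snd e = v}. - slL x e)))
       = (\<Sum>v\<in>V. (if v = w0 then Kf v v / 2 else 0) - (if x = Vert v then Kf v v / 2 else 0))"
      by (rule sum.cong) (auto simp: vsum_lemma[OF x])
    have w: "Kf w0 w0 = 0" using Kf_prop(2)[OF w0V] .
    show ?thesis
    proof (cases x)
      case (Vert u)
      then have u: "u \<in> V" using x by simp
      have "(\<Sum>e\<in>E. if ton x e then Gq e (tpos x) else 0) = 0" using Vert by simp
      moreover have "(\<Sum>v\<in>V. (if v = w0 then Kf v v / 2 else 0) - (if x = Vert v then Kf v v / 2 else 0)) = - (Kf u u / 2)"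
        using w u finV w0V Vert by (simp add: sum_subtractf)
      ultimately show ?thesis unfolding c using Vert u by simp
    next
      case (Inner e' s)
      then have e': "e' \<in> E" "0 < s" "s < L e'" using x by auto
      have "(\<Sum>e\<in>E. if ton x e then Gq e (tpos x) else 0) = (\<Sum>e\<in>E. if e' = e then Gq e s else 0)"
        using Inner by (intro sum.cong) auto
      also have "\<dots> = Gq e' s" using e' finE by (simp add: sum.delta')
      finally have g: "(\<Sum>e\<in>E. if ton x e then Gq e (tpos x) else 0) = Gq e' s" .
      have "(\<Sum>v\<in>V. (if v = w0 then Kf v v / 2 else 0) - (if x = Vert v then Kf v v / 2 else 0)) = 0"
        using w finV w0V Inner by (simp add: sum_subtractf)
      moreover have "Yp x x = 2 * Gq e' s"
        using Ydiag_Gq[OF e'(1), of s] e' Inner unfolding pt_of_def by auto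
      ultimately show ?thesis unfolding c g by simp
    qed
  qed
  finally show ?thesis .
qed

lemma mu0_canonical: "is_canonical V E L mu0"
  unfolding is_canonical_def
proof (intro conjI exI ballI)
  show "is_gmeas V E L mu0" by (rule mu0_gmeas)
  show "integ V E L mu0 (\<lambda>_. 1) = 1" by (rule mu0_mass)
  fix x assume x: "x \<in> points V E L"
  have "integ V E L mu0 (\<lambda>z. jv V E L z x x) = integ V E L mu0 (\<lambda>z. 1 * Yp z z + (-2) * Yp x z + Yp x x * 1)"
  proof (rule integ_cong, intro ballI)
    fix z assume z: "z \<in> points V E L"
    show "jv V E L z x x = 1 * Yp z z + (-2) * Yp x z + Yp x x * 1"
      unfolding jv_eq[OF z x] Fv_def using x Yp_sym[OF x z] by simp
  qed
  also have "\<dots> = 1 * integ V E L mu0 (\<lambda>z. Yp z z) + (-2) * integ V E L mu0 (Yp x) + Yp x x * integ V E L mu0 (\<lambda>_. 1)"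
    by (rule integ_lin3[OF mu0_gmeas cont_Ydiag cont_Yp[OF x] cont_const])
  also have "\<dots> = integ V E L mu0 (\<lambda>z. Yp z z)"
    unfolding green_mu0[OF x] mu0_mass by simp
  finally show "integ V E L mu0 (\<lambda>z. jv V E L z x x) = integ V E L mu0 (\<lambda>z. Yp z z)" .
qed

lemma mu_can_canonical: "is_canonical V E L (mu_can V E L)"
  unfolding mu_can_def using mu0_canonical by (rule someI)

end


lemma alg_final:
  fixes P R C d' :: real assumes D: "d' + 2 \<noteq> 0"
  shows "((P - d' * R) / 2 + 2 * (C - R / 2)) / (d' + 2) - 1 / (d' + 2) * (4 * (C / 2) + P / 2) = - R / 2"
proof -
  define D where "D = d' + 2"
  have d: "d' = D - 2" unfolding D_def by simp
  have D0: "D \<noteq> 0" using D unfolding D_def .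
  have "((P - (D - 2) * R) / 2 + 2 * (C - R / 2)) / D - 1 / D * (4 * (C / 2) + P / 2) = - R / 2"
    using D0 by (simp add: field_simps)
  then show ?thesis unfolding d by simp
qed

context mg begin

lemma res_vert: "a \<in> V \<Longrightarrow> b \<in> V \<Longrightarrow> res V E L (Vert a) (Vert b) = Kf a a + Kf b b - 2 * Kf a b"
  using res_formula[of "Vert a" "Vert b"] by simp

lemma integ_muD: "integ V E L (mu_D V E L a) F
   = ((\<Sum>v\<in>V. of_int (a v) * F (Vert v)) + 2 * integ V E L (mu_can V E L) F) / (of_int (deg V a) + 2)"
proof -
  define D where "D = (of_int (deg V a) + 2 :: real)"
  have 1: "(\<Sum>v\<in>V. fst (mu_D V E L a) v * F (Vert v)) = ((\<Sum>v\<in>V. of_int (a v) * F (Vert v)) + 2 * (\<Sum>v\<in>V. fst (mu_can V E L) v * F (Vert v))) / D"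
    unfolding mu_D_def D_def by (simp add: sum_divide_distrib sum_distrib_left sum.distrib[symmetric] field_simps)
  have 2: "integral {0..L e} (\<lambda>t. snd (mu_D V E L a) e t * F (pt_of L e t)) = (2 / D) * integral {0..L e} (\<lambda>t. snd (mu_can V E L) e t * F (pt_of L e t))" for e
  proof -
    have "integral {0..L e} (\<lambda>t. snd (mu_D V E L a) e t * F (pt_of L e t)) = integral {0..L e} (\<lambda>t. (2 / D) * (snd (mu_can V E L) e t * F (pt_of L e t)))"
      by (rule integral_cong) (simp add: mu_D_def D_def)
    then show ?thesis by (simp only: integral_mult_right)
  qed
  have 3: "(\<Sum>e\<in>E. 2 / D * integral {0..L e} (\<lambda>t. snd (mu_can V E L) e t * F (pt_of L e t)))
     = 2 / D * (\<Sum>e\<in>E. integral {0..L e} (\<lambda>t. snd (mu_can V E L) e t * F (pt_of L e t)))"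
    by (simp add: sum_distrib_left)
  show ?thesis unfolding integ_def 1 2 3 D_def[symmetric]
    by (simp add: add_divide_distrib)
qed

lemma g_tau:
  assumes x: "x \<in> points V E L" and y: "y \<in> points V E L" and d: "deg V a \<noteq> -2"
  shows "g_mu V E L (mu_D V E L a) x y = tau_D V E L a x y - res V E L x y / 2"
proof -
  define \<mu> where "\<mu> = mu_can V E L"
  have can: "is_canonical V E L \<mu>" unfolding \<mu>_def by (rule mu_can_canonical)
  then have gm: "is_gmeas V E L \<mu>" and mass: "integ V E L \<mu> (\<lambda>_. 1) = 1"
    and "\<exists>C. \<forall>x\<in>points V E L. integ V E L \<mu> (\<lambda>z. jv V E L z x x) = C"
    unfolding is_canonical_def by auto
  then obtain C where C: "\<forall>x\<in>points V E L. integ V E L \<mu> (\<lambda>z. jv V E L z x x) = C" by blast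
  have x0: "Vert (SOME v. v \<in> V) \<in> points V E L" using Vne by (simp add: some_in_eq)
  have tau: "tau_graph V E L = C / 2"
    unfolding tau_graph_def Let_def using C x0 \<mu>_def by simp
  have intR: "integ V E L \<mu> (\<lambda>z. res V E L z w) = C" if w: "w \<in> points V E L" for w
  proof -
    have "integ V E L \<mu> (\<lambda>z. res V E L z w) = integ V E L \<mu> (\<lambda>z. jv V E L z w w)"
      by (rule integ_cong) (use res_sym[OF _ w] w in \<open>auto simp: res_def\<close>)
    then show ?thesis using C w by simp
  qed
  define R where "R = res V E L x y"
  have intJ: "integ V E L \<mu> (\<lambda>z. jv V E L z x y) = C - R / 2"
  proof -
    have "integ V E L \<mu> (\<lambda>z. jv V E L z x y) = integ V E L \<mu> (\<lambda>z. (1/2) * res V E L z x + (1/2) * res V E L z y + (- R / 2) * 1)"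
    proof (rule integ_cong, intro ballI)
      fix z assume z: "z \<in> points V E L"
      show "jv V E L z x y = (1/2) * res V E L z x + (1/2) * res V E L z y + (- R / 2) * 1"
        using jv_formula[OF z x y] unfolding R_def by (simp add: field_simps)
    qed
    also have "\<dots> = (1/2) * integ V E L \<mu> (\<lambda>z. res V E L z x) + (1/2) * integ V E L \<mu> (\<lambda>z. res V E L z y) + (- R / 2) * integ V E L \<mu> (\<lambda>_. 1)"
      by (rule integ_lin3[OF gm cont_res[OF x] cont_res[OF y] cont_const])
    finally show ?thesis unfolding intR[OF x] intR[OF y] mass by simp
  qed
  define d' where "d' = (of_int (deg V a) :: real)"
  have d'sum: "d' = (\<Sum>v\<in>V. of_int (a v))" unfolding d'_def deg_def by simp
  have D: "d' + 2 \<noteq> 0" using d unfolding d'_def by linarith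
  have sumJ: "(\<Sum>v\<in>V. of_int (a v) * jv V E L (Vert v) x y) = (res_D V E L a x + res_D V E L a y - d' * R) / 2"
  proof -
    have "(\<Sum>v\<in>V. of_int (a v) * jv V E L (Vert v) x y) = (\<Sum>v\<in>V. (of_int (a v) * res V E L (Vert v) x + of_int (a v) * res V E L (Vert v) y - of_int (a v) * R) / 2)"
    proof (rule sum.cong[OF refl])
      fix v assume v: "v \<in> V"
      have "jv V E L (Vert v) x y = (res V E L (Vert v) x + res V E L (Vert v) y - R) / 2"
        using jv_formula[of "Vert v" x y] v x y unfolding R_def by simp
      then show "of_int (a v) * jv V E L (Vert v) x y = (of_int (a v) * res V E L (Vert v) x + of_int (a v) * res V E L (Vert v) y - of_int (a v) * R) / 2"
        by (simp only:) (simp add: algebra_simps add_divide_distrib diff_divide_distrib)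
    qed
    also have "\<dots> = (res_D V E L a x + res_D V E L a y - d' * R) / 2"
      unfolding res_D_def d'sum by (simp add: sum_divide_distrib[symmetric] sum.distrib sum_subtractf sum_distrib_right)
    finally show ?thesis .
  qed
  have "g_mu V E L (mu_D V E L a) x y - tau_D V E L a x y
     = ((res_D V E L a x + res_D V E L a y - d' * R) / 2 + 2 * (C - R / 2)) / (d' + 2)
       - 1 / (d' + 2) * (4 * (C / 2) + (res_D V E L a x + res_D V E L a y) / 2)"
    unfolding g_mu_def tau_D_def integ_muD sumJ intJ[unfolded \<mu>_def] tau d'_def by simp
  also have "\<dots> = - R / 2"
    by (rule alg_final[OF D])
  finally show ?thesis unfolding R_def by simp
qed

end


lemma alg1:
  fixes kpp kpq kqp kqq l x y :: real
  assumes l: "l > 0" and s: "kqp = kpq"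
  shows "((1 - x / l) * ((1 - x / l) * kpp + (x / l) * kqp) + (x / l) * ((1 - x / l) * kpq + (x / l) * kqq) + tent l x x)
       + ((1 - y / l) * ((1 - y / l) * kpp + (y / l) * kqp) + (y / l) * ((1 - y / l) * kpq + (y / l) * kqq) + tent l y y)
       - 2 * ((1 - y / l) * ((1 - x / l) * kpp + (x / l) * kqp) + (y / l) * ((1 - x / l) * kpq + (x / l) * kqq) + tent l x y)
     = \<bar>x - y\<bar> - (x - y)\<^sup>2 * (l - (kpp + kqq - 2 * kpq)) / l\<^sup>2"
proof (cases "x \<le> y")
  case True
  then have a: "\<bar>y - x\<bar> = y - x" "\<bar>x - y\<bar> = y - x" by auto
  show ?thesis unfolding tent_def a s using l by (simp add: power2_eq_square field_simps)
next
  case False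
  then have a: "\<bar>y - x\<bar> = x - y" "\<bar>x - y\<bar> = x - y" by auto
  show ?thesis unfolding tent_def a s using l by (simp add: power2_eq_square field_simps)
qed

lemma alg2:
  fixes k :: "'v \<Rightarrow> 'v \<Rightarrow> real" and li lj x y :: real
  assumes li: "li > 0" and lj: "lj > 0"
    and s1: "k va ua = k ua va" and s2: "k ub ua = k ua ub" and s3: "k vb ua = k ua vb"
    and s4: "k ub va = k va ub" and s5: "k vb va = k va vb" and s6: "k vb ub = k ub vb"
  defines "res2 \<equiv> \<lambda>a b. k a a + k b b - 2 * k a b"
  shows "- (((1 - x / li) * ((1 - x / li) * k ua ua + (x / li) * k va ua) + (x / li) * ((1 - x / li) * k ua va + (x / li) * k va va) + tent li x x)
       + ((1 - y / lj) * ((1 - y / lj) * k ub ub + (y / lj) * k vb ub) + (y / lj) * ((1 - y / lj) * k ub vb + (y / lj) * k vb vb) + tent lj y y)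
       - 2 * ((1 - y / lj) * ((1 - x / li) * k ua ub + (x / li) * k va ub) + (y / lj) * ((1 - x / li) * k ua vb + (x / li) * k va vb))) / 2
     = x\<^sup>2 * (li - res2 ua va) / (2 * li\<^sup>2)
       + y\<^sup>2 * (lj - res2 ub vb) / (2 * lj\<^sup>2)
       - x * y / (li * lj) * ((res2 ub ua + res2 ub vb - res2 ua vb) / 2 - (res2 ub va + res2 ub vb - res2 va vb) / 2)
       - x / (2 * li) * (li - 2 * ((res2 ua va + res2 ua ub - res2 va ub) / 2))
       - y / (2 * lj) * (lj - 2 * ((res2 ub ua + res2 ub vb - res2 ua vb) / 2))
       - res2 ua ub / 2"
  unfolding res2_def tent_def s1 s2 s3 s4 s5 s6 using li lj by (simp add: power2_eq_square field_simps)

theorem theorem3p8: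
  fixes V :: "'v set" and E :: "('v \<times> 'v) set" and L :: "'v \<times> 'v \<Rightarrow> real"
    and a :: "'v \<Rightarrow> int"
  assumes "metrized_graph V E L"
    and "\<forall>v. v \<notin> V \<longrightarrow> a v = 0"
    and "deg V a \<noteq> -2"
  shows "(\<forall>p q. (p, q) \<in> E \<and> \<not> is_bridge V E (p, q) \<longrightarrow>
            (\<forall>x\<in>{0..L (p, q)}. \<forall>y\<in>{0..L (p, q)}.
              g_mu V E L (mu_D V E L a) (pt_of L (p, q) x) (pt_of L (p, q) y) =
                tau_D V E L a (pt_of L (p, q) x) (pt_of L (p, q) y) - \<bar>x - y\<bar> / 2
                + (x - y)\<^sup>2 * (L (p, q) - res V E L (Vert p) (Vert q)) / (2 * (L (p, q))\<^sup>2)))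
       \<and> (\<forall>pi qi pj qj. (pi, qi) \<in> E \<and> (pj, qj) \<in> E \<and> (pi, qi) \<noteq> (pj, qj)
            \<and> \<not> is_bridge V E (pi, qi) \<and> \<not> is_bridge V E (pj, qj) \<longrightarrow>
            (\<forall>x\<in>{0..L (pi, qi)}. \<forall>y\<in>{0..L (pj, qj)}.
              g_mu V E L (mu_D V E L a) (pt_of L (pi, qi) x) (pt_of L (pj, qj) y) =
                tau_D V E L a (pt_of L (pi, qi) x) (pt_of L (pj, qj) y)
                + x\<^sup>2 * (L (pi, qi) - res V E L (Vert pi) (Vert qi)) / (2 * (L (pi, qi))\<^sup>2)
                + y\<^sup>2 * (L (pj, qj) - res V E L (Vert pj) (Vert qj)) / (2 * (L (pj, qj))\<^sup>2)
                - x * y / (L (pi, qi) * L (pj, qj)) *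
                    (jv V E L (Vert pj) (Vert pi) (Vert qj) - jv V E L (Vert pj) (Vert qi) (Vert qj))
                - x / (2 * L (pi, qi)) * (L (pi, qi) - 2 * jv V E L (Vert pi) (Vert qi) (Vert pj))
                - y / (2 * L (pj, qj)) * (L (pj, qj) - 2 * jv V E L (Vert pj) (Vert pi) (Vert qj))
                - res V E L (Vert pi) (Vert pj) / 2))"
proof -
  interpret mg V E L by unfold_locales (rule assms(1))
  have P1: "\<forall>p q. (p, q) \<in> E \<and> \<not> is_bridge V E (p, q) \<longrightarrow>
            (\<forall>x\<in>{0..L (p, q)}. \<forall>y\<in>{0..L (p, q)}.
              g_mu V E L (mu_D V E L a) (pt_of L (p, q) x) (pt_of L (p, q) y) =
                tau_D V E L a (pt_of L (p, q) x) (pt_of L (p, q) y) - \<bar>x - y\<bar> / 2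
                + (x - y)\<^sup>2 * (L (p, q) - res V E L (Vert p) (Vert q)) / (2 * (L (p, q))\<^sup>2))"
  proof (intro allI impI ballI)
    fix p q x y assume pq: "(p, q) \<in> E \<and> \<not> is_bridge V E (p, q)"
      and x: "x \<in> {0..L (p, q)}" and y: "y \<in> {0..L (p, q)}"
    have e: "(p, q) \<in> E" using pq by simp
    have Le: "L (p, q) > 0" using Lpos[OF e] .
    have pV: "p \<in> V" and qV: "q \<in> V" using fstE[OF e] sndE[OF e] by auto
    have Px: "pt_of L (p, q) x \<in> points V E L" using pt_in_points[OF e] x by auto
    have Py: "pt_of L (p, q) y \<in> points V E L" using pt_in_points[OF e] y by auto
    have g: "g_mu V E L (mu_D V E L a) (pt_of L (p, q) x) (pt_of L (p, q) y)
       = tau_D V E L a (pt_of L (p, q) x) (pt_of L (p, q) y) - res V E L (pt_of L (p, q) x) (pt_of L (p, q) y) / 2"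
      by (rule g_tau[OF Px Py assms(3)])
    have sym: "Kf q p = Kf p q" using Kf_sym[OF qV pV] .
    have R: "res V E L (pt_of L (p, q) x) (pt_of L (p, q) y) = \<bar>x - y\<bar> - (x - y)\<^sup>2 * (L (p, q) - res V E L (Vert p) (Vert q)) / (L (p, q))\<^sup>2"
      unfolding res_formula[OF Px Py] res_vert[OF pV qV]
      using Yp_pt_pt[OF e _ _ e, of x x] Yp_pt_pt[OF e _ _ e, of y y] Yp_pt_pt[OF e _ _ e, of x y] x y
        alg1[OF Le sym, where x=x and y=y and kpp="Kf p p" and kqq="Kf q q"]
      by simp
    show "g_mu V E L (mu_D V E L a) (pt_of L (p, q) x) (pt_of L (p, q) y) =
                tau_D V E L a (pt_of L (p, q) x) (pt_of L (p, q) y) - \<bar>x - y\<bar> / 2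
                + (x - y)\<^sup>2 * (L (p, q) - res V E L (Vert p) (Vert q)) / (2 * (L (p, q))\<^sup>2)"
      unfolding g R by (simp add: diff_divide_distrib)
  qed
  have P2: "\<forall>pi qi pj qj. (pi, qi) \<in> E \<and> (pj, qj) \<in> E \<and> (pi, qi) \<noteq> (pj, qj)
            \<and> \<not> is_bridge V E (pi, qi) \<and> \<not> is_bridge V E (pj, qj) \<longrightarrow>
            (\<forall>x\<in>{0..L (pi, qi)}. \<forall>y\<in>{0..L (pj, qj)}.
              g_mu V E L (mu_D V E L a) (pt_of L (pi, qi) x) (pt_of L (pj, qj) y) =
                tau_D V E L a (pt_of L (pi, qi) x) (pt_of L (pj, qj) y)
                + x\<^sup>2 * (L (pi, qi) - res V E L (Vert pi) (Vert qi)) / (2 * (L (pi, qi))\<^sup>2)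
                + y\<^sup>2 * (L (pj, qj) - res V E L (Vert pj) (Vert qj)) / (2 * (L (pj, qj))\<^sup>2)
                - x * y / (L (pi, qi) * L (pj, qj)) *
                    (jv V E L (Vert pj) (Vert pi) (Vert qj) - jv V E L (Vert pj) (Vert qi) (Vert qj))
                - x / (2 * L (pi, qi)) * (L (pi, qi) - 2 * jv V E L (Vert pi) (Vert qi) (Vert pj))
                - y / (2 * L (pj, qj)) * (L (pj, qj) - 2 * jv V E L (Vert pj) (Vert pi) (Vert qj))
                - res V E L (Vert pi) (Vert pj) / 2)"
  proof (intro allI impI ballI)
    fix a1 b1 a2 b2 x y assume h: "(a1, b1) \<in> E \<and> (a2, b2) \<in> E \<and> (a1, b1) \<noteq> (a2, b2)
            \<and> \<not> is_bridge V E (a1, b1) \<and> \<not> is_bridge V E (a2, b2)"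
      and x: "x \<in> {0..L (a1, b1)}" and y: "y \<in> {0..L (a2, b2)}"
    have ei: "(a1, b1) \<in> E" and ej: "(a2, b2) \<in> E" and ne: "(a1, b1) \<noteq> (a2, b2)" using h by auto
    have Li: "L (a1, b1) > 0" using Lpos[OF ei] .
    have x0: "0 \<le> x" "x \<le> L (a1, b1)" using x by auto
    have y0: "0 \<le> y" "y \<le> L (a2, b2)" using y by auto
    have Lj: "L (a2, b2) > 0" using Lpos[OF ej] .
    have V1: "a1 \<in> V" "b1 \<in> V" using fstE[OF ei] sndE[OF ei] by auto
    have V2: "a2 \<in> V" "b2 \<in> V" using fstE[OF ej] sndE[OF ej] by auto
    have Px: "pt_of L (a1, b1) x \<in> points V E L" using pt_in_points[OF ei] x by auto
    have Py: "pt_of L (a2, b2) y \<in> points V E L" using pt_in_points[OF ej] y by auto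
    have g: "g_mu V E L (mu_D V E L a) (pt_of L (a1, b1) x) (pt_of L (a2, b2) y)
       = tau_D V E L a (pt_of L (a1, b1) x) (pt_of L (a2, b2) y) + (- res V E L (pt_of L (a1, b1) x) (pt_of L (a2, b2) y) / 2)"
      using g_tau[OF Px Py assms(3)] by simp
    have jvv: "jv V E L (Vert z) (Vert u) (Vert w) = (res V E L (Vert z) (Vert u) + res V E L (Vert z) (Vert w) - res V E L (Vert u) (Vert w)) / 2"
      if "z \<in> V" "u \<in> V" "w \<in> V" for z u w
      using jv_formula[of "Vert z" "Vert u" "Vert w"] that by simp
    have rv: "res V E L (Vert u) (Vert w) = Kf u u + Kf w w - 2 * Kf u w" if "u \<in> V" "w \<in> V" for u w
      using res_vert that by simp
    note A = alg2[where k=Kf and ua=a1 and va=b1 and ub=a2 and vb=b2 and li="L (a1, b1)" and lj="L (a2, b2)" and x=x and y=y,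
      OF Li Lj Kf_sym[OF V1(2) V1(1)] Kf_sym[OF V2(1) V1(1)] Kf_sym[OF V2(2) V1(1)] Kf_sym[OF V2(1) V1(2)]
      Kf_sym[OF V2(2) V1(2)] Kf_sym[OF V2(2) V2(1)]]
    have R: "res V E L (pt_of L (a1, b1) x) (pt_of L (a2, b2) y) =
       Yp (pt_of L (a1, b1) x) (pt_of L (a1, b1) x) + Yp (pt_of L (a2, b2) y) (pt_of L (a2, b2) y) - 2 * Yp (pt_of L (a1, b1) x) (pt_of L (a2, b2) y)"
      by (rule res_formula[OF Px Py])
    show "g_mu V E L (mu_D V E L a) (pt_of L (a1, b1) x) (pt_of L (a2, b2) y) =
                tau_D V E L a (pt_of L (a1, b1) x) (pt_of L (a2, b2) y)
                + x\<^sup>2 * (L (a1, b1) - res V E L (Vert a1) (Vert b1)) / (2 * (L (a1, b1))\<^sup>2)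
                + y\<^sup>2 * (L (a2, b2) - res V E L (Vert a2) (Vert b2)) / (2 * (L (a2, b2))\<^sup>2)
                - x * y / (L (a1, b1) * L (a2, b2)) *
                    (jv V E L (Vert a2) (Vert a1) (Vert b2) - jv V E L (Vert a2) (Vert b1) (Vert b2))
                - x / (2 * L (a1, b1)) * (L (a1, b1) - 2 * jv V E L (Vert a1) (Vert b1) (Vert a2))
                - y / (2 * L (a2, b2)) * (L (a2, b2) - 2 * jv V E L (Vert a2) (Vert a1) (Vert b2))
                - res V E L (Vert a1) (Vert a2) / 2"
      unfolding g R jvv[OF V2(1) V1(1) V2(2)] jvv[OF V2(1) V1(2) V2(2)] jvv[OF V1(1) V1(2) V2(1)]
        rv[OF V1] rv[OF V2] rv[OF V2(1) V1(1)] rv[OF V2(1) V1(2)] rv[OF V1(1) V2(2)] rv[OF V1(2) V2(2)] rv[OF V1(1) V2(1)]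
        rv[OF V1(2) V2(1)]
        Yp_pt_pt[OF ei x0 ei x0] Yp_pt_pt[OF ej y0 ej y0] Yp_pt_pt[OF ei x0 ej y0] if_not_P[OF ne] if_True
      using A by simp
  qed
  show ?thesis using P1 P2 by blast
qed


end
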